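(* Let $p$ be an admissible linear order on $\mathcal A=L_e\sqcup L_o\sqcup G$, and let $p^t$ be the reverse order. Let $\phi_{p^t}$ be the generalised RSK shape map computed with the order $p^t$ and with the roles of $L_e$ and $L_o$ exchanged (i.e. with $L_e^t=L_o$, $L_o^t=L_e$, and $G$ unchanged). Then for every word $w\in\mathcal A^n$ whose letters from $G$ are pairwise distinct (hence for $\mu_n$-almost every $w$), $\phi_p(w)=\phi_{p^t}(w)^t$, where $\lambda^t$ denotes the transpose of a Young diagram $\lambda$.
   Context: Alphabet: $\mathcal A=L_e\sqcup L_o\sqcup G$ where $L_e=\{x_1,x_2,\dots\}$, $L_o=\{y_1,y_2,\dots\}$ are discrete and $G$ is identified with an interval of $\mathbb R$; $\mu_n=\mu_1^{\otimes n}$ where $\mu_1(\{x_i\})=\alpha_i$, $\mu_1(\{y_j\})=\beta_j$, and $\mu_1$ restricted to $G$ is $\gamma$ times normalized Lebesgue measure, for Thoma parameters $\mathcal P$. An admissible order is a linear order $p$ on $\mathcal A$ for which $G$ is an interval and whose restriction to $G$ is the usual order of reals or its reverse. Generalised RSK (row insertion) w.r.t. an order and a splitting into $L_e$, $L_o$, $G$: to insert a letter $x$ into a tableau $T$: in the first row, if $x\in L_e$ find the leftmost entry strictly greater than $x$; if $x\in L_o\cup G$ find the leftmost entry greater than or equal to $x$; if there is none, append $x$ at the end of the row and stop; otherwise $x$ replaces that entry and the replaced entry is inserted into the second row by the same rule, and so on (an entry bumped out of the last row forms a new row). For $w=z_1\cdots z_n$, $R(w)$ is obtained by inserting $z_1,\dots,z_n$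 successively into the empty tableau, and $\phi_p(w)$ is the shape of $R(w)$. *)

theory Defs
  imports Complex_Main
begin

datatype letter = LE nat | LO nat | GL real

fun is_LE :: "letter \<Rightarrow> bool" where
  "is_LE (LE _) = True" | "is_LE _ = False"
fun is_LO :: "letter \<Rightarrow> bool" where
  "is_LO (LO _) = True" | "is_LO _ = False"
fun is_G :: "letter \<Rightarrow> bool" where
  "is_G (GL _) = True" | "is_G _ = False"

definition admissible :: "letter rel \<Rightarrow> bool" where
  "admissible r \<longleftrightarrow> linear_order r \<and>
     (\<forall>a b c. is_G a \<and> is_G c \<and> (a, b) \<in> r \<and> (b, c) \<in> r \<longrightarrow> is_G b) \<and>
     ((\<forall>s t. (GL s, GL t) \<in> r \<longleftrightarrow> s \<le> t) \<or> (\<forall>s t. (GL s, GL t) \<in> r \<longleftrightarrow> t \<le> s))"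

text \<open>Bumping rule. \<open>strict x\<close> holds iff x lies in the class playing the role of L_e
  (bump the leftmost entry strictly greater than x); otherwise bump the leftmost
  entry greater than or equal to x.\<close>
definition bumps :: "letter rel \<Rightarrow> (letter \<Rightarrow> bool) \<Rightarrow> letter \<Rightarrow> letter \<Rightarrow> bool" where
  "bumps r strict x y \<longleftrightarrow> (if strict x then (x, y) \<in> r \<and> x \<noteq> y else (x, y) \<in> r)"

fun row_ins :: "letter rel \<Rightarrow> (letter \<Rightarrow> bool) \<Rightarrow> letter \<Rightarrow> letter list \<Rightarrow> letter list \<times> letter option" where
  "row_ins r strict x [] = ([x], None)"
| "row_ins r strict x (y # ys) =
     (if bumps r strict x y then (x # ys, Some y)
      else (let (ys', b) = row_ins r strict x ys in (y # ys', b)))"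

fun tab_ins :: "letter rel \<Rightarrow> (letter \<Rightarrow> bool) \<Rightarrow> letter \<Rightarrow> letter list list \<Rightarrow> letter list list" where
  "tab_ins r strict x [] = [[x]]"
| "tab_ins r strict x (row # rows) =
     (case row_ins r strict x row of
        (row', None) \<Rightarrow> row' # rows
      | (row', Some b) \<Rightarrow> row' # tab_ins r strict b rows)"

definition RSK :: "letter rel \<Rightarrow> (letter \<Rightarrow> bool) \<Rightarrow> letter list \<Rightarrow> letter list list" where
  "RSK r strict w = fold (tab_ins r strict) w []"

definition shape :: "letter list list \<Rightarrow> nat list" where
  "shape T = map length T"

definition phi :: "letter rel \<Rightarrow> letter list \<Rightarrow> nat list" where
  "phi r w = shape (RSK r is_LE w)"

definition phi_t :: "letter rel \<Rightarrow> letter list \<Rightarrow> nat list" where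
  "phi_t r w = shape (RSK (r\<inverse>) is_LO w)"

definition conj_part :: "nat list \<Rightarrow> nat list" where
  "conj_part lam = map (\<lambda>i. length (filter (\<lambda>l. i < l) lam)) [0..<fold max lam 0]"

end

theory Submission imports Defs "HOL-Library.Multiset" begin

fun rins :: "('a \<Rightarrow> 'a \<Rightarrow> bool) \<Rightarrow> 'a \<Rightarrow> 'a list \<Rightarrow> 'a list \<times> 'a option" where
  "rins B x [] = ([x], None)"
| "rins B x (y # ys) = (if B x y then (x # ys, Some y)
      else (let (ys', b) = rins B x ys in (y # ys', b)))"

fun tins :: "('a \<Rightarrow> 'a \<Rightarrow> bool) \<Rightarrow> 'a \<Rightarrow> 'a list list \<Rightarrow> 'a list list" where
  "tins B x [] = [[x]]"
| "tins B x (row # rows) =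
     (case rins B x row of
        (row', None) \<Rightarrow> row' # rows
      | (row', Some b) \<Rightarrow> row' # tins B b rows)"

definition rsk :: "('a \<Rightarrow> 'a \<Rightarrow> bool) \<Rightarrow> 'a list \<Rightarrow> 'a list list" where
  "rsk B w = fold (tins B) w []"

lemma row_ins_rins: "row_ins r strict x R = rins (bumps r strict) x R"
  by (induction R) auto

lemma tab_ins_tins: "tab_ins r strict x T = tins (bumps r strict) x T"
  by (induction T arbitrary: x) (auto simp: row_ins_rins split: option.splits prod.splits)

lemma RSK_rsk: "RSK r strict w = rsk (bumps r strict) w"
proof -
  have "tab_ins r strict = tins (bumps r strict)" by (rule ext)+ (simp add: tab_ins_tins)
  then show ?thesis unfolding RSK_def rsk_def by simp
qed

lemma rsk_snoc: "rsk B (w @ [x]) = tins B x (rsk B w)"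
  by (simp add: rsk_def)

lemma rsk_Nil[simp]: "rsk B [] = []" by (simp add: rsk_def)

lemma rins_map:
  assumes "\<And>a b. B' a b = B (f a) (f b)"
  shows "rins B (f x) (map f R) = (map f (fst (rins B' x R)), map_option f (snd (rins B' x R)))"
  by (induction R) (auto simp: assms split: prod.splits)

lemma tins_map:
  assumes "\<And>a b. B' a b = B (f a) (f b)"
  shows "tins B (f x) (map (map f) T) = map (map f) (tins B' x T)"
proof (induction T arbitrary: x)
  case Nil then show ?case by simp
next
  case (Cons R T)
  show ?case using rins_map[of B' B f x R, OF assms] Cons
    by (cases "rins B' x R") (auto split: option.splits)
qed

lemma rsk_map:
  assumes "\<And>a b. B' a b = B (f a) (f b)"
  shows "rsk B (map f w) = map (map f) (rsk B' w)"
  by (induction w rule: rev_induct) (simp_all add: rsk_snoc tins_map[of B' B f, OF assms])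

lemma rins_cong:
  assumes "\<And>y. y \<in> set R \<Longrightarrow> B1 x y = B2 x y"
  shows "rins B1 x R = rins B2 x R"
  using assms by (induction R) auto

lemma rins_set: "set (fst (rins B x R)) \<union> set_option (snd (rins B x R)) = insert x (set R)"
proof (induction R)
  case Nil then show ?case by simp
next
  case (Cons y ys)
  obtain a c where "rins B x ys = (a, c)" by fastforce
  with Cons show ?case by auto
qed

lemma tins_cong:
  assumes "\<And>a b. a \<in> A \<Longrightarrow> b \<in> A \<Longrightarrow> B1 a b = B2 a b"
    and "x \<in> A" and "\<forall>R\<in>set T. set R \<subseteq> A"
  shows "tins B1 x T = tins B2 x T \<and> (\<forall>R\<in>set (tins B1 x T). set R \<subseteq> A)"
  using assms(2,3)
proof (induction T arbitrary: x)
  case Nil then show ?case by simp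
next
  case (Cons R T)
  have e: "rins B1 x R = rins B2 x R" using assms(1) Cons.prems by (intro rins_cong) auto
  obtain R' b where rb: "rins B1 x R = (R', b)" by fastforce
  have s: "set R' \<union> set_option b = insert x (set R)" using rins_set[of B1 x R] rb by simp
  show ?case
  proof (cases b)
    case None
    have rb2: "rins B2 x R = (R', None)" using e rb None by simp
    show ?thesis using rb rb2 s None Cons.prems by auto
  next
    case (Some c)
    have "c \<in> A" using s Some Cons.prems by auto
    then have "tins B1 c T = tins B2 c T \<and> (\<forall>R\<in>set (tins B1 c T). set R \<subseteq> A)"
      using Cons.IH Cons.prems by auto
    moreover have rb2: "rins B2 x R = (R', Some c)" using e rb Some by simp
    ultimately show ?thesis using rb rb2 s Some Cons.prems by auto
  qed
qed

lemma rsk_cong: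
  assumes "\<And>a b. a \<in> A \<Longrightarrow> b \<in> A \<Longrightarrow> B1 a b = B2 a b" and "set w \<subseteq> A"
  shows "rsk B1 w = rsk B2 w \<and> (\<forall>R\<in>set (rsk B1 w). set R \<subseteq> A)"
  using assms(2)
proof (induction w rule: rev_induct)
  case Nil then show ?case by simp
next
  case (snoc x w)
  then show ?case using tins_cong[of A B1 B2 x "rsk B1 w", OF assms(1)] by (simp add: rsk_snoc)
qed


fun olist :: "'a option \<Rightarrow> 'a list" where "olist None = []" | "olist (Some y) = [y]"

lemma rins_None:
  "rins B x R = (R', None) \<Longrightarrow> R' = R @ [x] \<and> (\<forall>i<length R. \<not> B x (R!i))"
proof (induction R arbitrary: R')
  case Nil then show ?case by simp
next
  case (Cons y ys)
  obtain a c where ac: "rins B x ys = (a, c)" by fastforce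
  show ?case
  proof (cases "B x y")
    case True then show ?thesis using Cons.prems by simp
  next
    case False
    then have "R' = y # a" "c = None" using Cons.prems ac by auto
    then show ?thesis using Cons.IH[of a] ac False by (auto simp: nth_Cons split: nat.splits)
  qed
qed

lemma rins_Some:
  "rins B x R = (R', Some y) \<Longrightarrow>
     \<exists>j<length R. R!j = y \<and> R' = R[j := x] \<and> B x y \<and> (\<forall>i<j. \<not> B x (R!i))"
proof (induction R arbitrary: R')
  case Nil then show ?case by simp
next
  case (Cons z zs)
  obtain a c where ac: "rins B x zs = (a, c)" by fastforce
  show ?case
  proof (cases "B x z")
    case True then show ?thesis using Cons.prems by auto
  next
    case False
    then have "R' = z # a" "c = Some y" using Cons.prems ac by auto
    then obtain j where "j<length zs" "zs!j = y" "a = zs[j := x]" "B x y" "\<forall>i<j. \<not> B x (zs!i)"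
      using Cons.IH[of a] ac by auto
    then show ?thesis using False \<open>R' = z # a\<close>
      by (intro exI[of _ "Suc j"]) (auto simp: nth_Cons split: nat.splits)
  qed
qed

lemma rins_mset: "mset (fst (rins B x R)) + (\<lambda>c. mset (olist c)) (snd (rins B x R)) = add_mset x (mset R)"
proof (induction R)
  case Nil then show ?case by simp
next
  case (Cons y ys)
  obtain a c where "rins B x ys = (a, c)" by fastforce
  with Cons show ?case by auto
qed

lemma tins_mset: "mset (concat (tins B x T)) = add_mset x (mset (concat T))"
proof (induction T arbitrary: x)
  case Nil then show ?case by simp
next
  case (Cons R T)
  obtain a c where ac: "rins B x R = (a, c)" by fastforce
  have m: "mset a + (\<lambda>c. mset (olist c)) c = add_mset x (mset R)" using rins_mset[of B x R] ac by simp
  show ?case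
  proof (cases c)
    case None then show ?thesis using ac m by simp
  next
    case (Some y) then show ?thesis using ac m Cons.IH[of y] by (simp add: algebra_simps)
  qed
qed

lemma rsk_mset: "mset (concat (rsk B w)) = mset w"
  by (induction w rule: rev_induct) (simp_all add: rsk_snoc tins_mset)

section \<open>Knuth moves\<close>

definition kmove :: "('a \<Rightarrow> 'a \<Rightarrow> bool) \<Rightarrow> 'a list \<Rightarrow> 'a list \<Rightarrow> bool" where
  "kmove lt w w' \<longleftrightarrow> (\<exists>u v x y z. lt x y \<and> lt y z \<and>
     ((w = u @ [y, x, z] @ v \<and> w' = u @ [y, z, x] @ v) \<or>
      (w = u @ [y, z, x] @ v \<and> w' = u @ [y, x, z] @ v) \<or>
      (w = u @ [x, z, y] @ v \<and> w' = u @ [z, x, y] @ v) \<or>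
      (w = u @ [z, x, y] @ v \<and> w' = u @ [x, z, y] @ v)))"

abbreviation knuth :: "('a \<Rightarrow> 'a \<Rightarrow> bool) \<Rightarrow> 'a list \<Rightarrow> 'a list \<Rightarrow> bool" where
  "knuth lt \<equiv> (kmove lt)\<^sup>*\<^sup>*"

lemma kmove_I2: "lt x y \<Longrightarrow> lt y z \<Longrightarrow> kmove lt (u @ [y, z, x] @ v) (u @ [y, x, z] @ v)"
  unfolding kmove_def
  apply (rule exI[of _ u], rule exI[of _ v], rule exI[of _ x], rule exI[of _ y], rule exI[of _ z])
  by simp

lemma kmove_I3: "lt x y \<Longrightarrow> lt y z \<Longrightarrow> kmove lt (u @ [x, z, y] @ v) (u @ [z, x, y] @ v)"
  unfolding kmove_def
  apply (rule exI[of _ u], rule exI[of _ v], rule exI[of _ x], rule exI[of _ y], rule exI[of _ z])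
  by simp

lemma kmove_sym: "kmove lt w w' \<Longrightarrow> kmove lt w' w"
  unfolding kmove_def by blast

lemma kmove_ctx: "kmove lt w w' \<Longrightarrow> kmove lt (p @ w @ q) (p @ w' @ q)"
  unfolding kmove_def
  apply (elim exE conjE)
  subgoal for u v x y z
    apply (rule exI[of _ "p @ u"], rule exI[of _ "v @ q"], rule exI[of _ x], rule exI[of _ y], rule exI[of _ z])
    by auto
  done

lemma knuth_ctx: "knuth lt w w' \<Longrightarrow> knuth lt (p @ w @ q) (p @ w' @ q)"
proof (induction rule: rtranclp_induct)
  case base then show ?case by simp
next
  case (step y z) then show ?case using kmove_ctx[of lt y z p q]
    by (meson rtranclp.rtrancl_into_rtrancl)
qed

lemma knuth_sym: "knuth lt w w' \<Longrightarrow> knuth lt w' w"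
proof (induction rule: rtranclp_induct)
  case base then show ?case by simp
next
  case (step y z) then show ?case using kmove_sym[of lt y z]
    by (meson converse_rtranclp_into_rtranclp)
qed

lemma kmove_mset: "kmove lt w w' \<Longrightarrow> mset w = mset w'"
  unfolding kmove_def by (auto simp: add_mset_commute)

lemma knuth_mset: "knuth lt w w' \<Longrightarrow> mset w = mset w'"
  by (induction rule: rtranclp_induct) (auto dest: kmove_mset)

lemma kmove_flip: "kmove (\<lambda>a b. lt b a) w w' = kmove lt w w'"
proof
  assume "kmove (\<lambda>a b. lt b a) w w'"
  then show "kmove lt w w'" unfolding kmove_def
    apply (elim exE conjE)
    subgoal for u v x y z
      apply (rule exI[of _ u], rule exI[of _ v], rule exI[of _ z], rule exI[of _ y], rule exI[of _ x])
      by auto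
    done
next
  assume "kmove lt w w'"
  then show "kmove (\<lambda>a b. lt b a) w w'" unfolding kmove_def
    apply (elim exE conjE)
    subgoal for u v x y z
      apply (rule exI[of _ u], rule exI[of _ v], rule exI[of _ z], rule exI[of _ y], rule exI[of _ x])
      by auto
    done
qed

definition rd :: "'a list list \<Rightarrow> 'a list" where "rd T = concat (rev T)"

locale sto =
  fixes lt :: "'a \<Rightarrow> 'a \<Rightarrow> bool"
  assumes irr: "\<not> lt a a"
    and trn: "lt a b \<Longrightarrow> lt b c \<Longrightarrow> lt a c"
    and tot: "a \<noteq> b \<Longrightarrow> lt a b \<or> lt b a"
begin

lemma asym: "lt a b \<Longrightarrow> \<not> lt b a"
  using irr trn by blast

definition colok :: "'a list \<Rightarrow> 'a list \<Rightarrow> bool" where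
  "colok R R2 \<longleftrightarrow> length R2 \<le> length R \<and> (\<forall>j<length R2. lt (R!j) (R2!j))"

fun tabl :: "'a list list \<Rightarrow> bool" where
  "tabl [] = True"
| "tabl (R # T) = (R \<noteq> [] \<and> sorted_wrt lt R \<and> tabl T \<and> (case T of [] \<Rightarrow> True | R2 # _ \<Rightarrow> colok R R2))"

lemma sorted_upd:
  assumes "sorted_wrt lt R" "j < length R" "\<forall>i<j. lt (R!i) x" "lt x (R!j)"
  shows "sorted_wrt lt (R[j := x])"
  unfolding sorted_wrt_iff_nth_less
proof (intro allI impI)
  fix i k assume ik0: "i < k" "k < length (R[j := x])"
  then have ik: "i < k \<and> k < length (R[j := x])" by simp
  have s: "\<And>i k. i < k \<Longrightarrow> k < length R \<Longrightarrow> lt (R!i) (R!k)"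
    using assms(1) by (auto simp: sorted_wrt_iff_nth_less)
  show "lt (R[j := x] ! i) (R[j := x] ! k)"
  proof (cases "i = j")
    case True
    then show ?thesis using ik assms s[of j k] trn by (auto simp: nth_list_update)
  next
    case False
    then show ?thesis using ik assms s[of i k] s[of i j] by (auto simp: nth_list_update)
  qed
qed

lemma sorted_snoc_lt:
  assumes "sorted_wrt lt R" "\<forall>i<length R. lt (R!i) x"
  shows "sorted_wrt lt (R @ [x])"
  using assms by (auto simp: sorted_wrt_append in_set_conv_nth)

lemma rins_None_lt:
  assumes "rins lt x R = (R', None)" "x \<notin> set R"
  shows "R' = R @ [x] \<and> (\<forall>i<length R. lt (R!i) x)"
  using rins_None[OF assms(1)] assms(2) tot by (metis nth_mem)

lemma rins_Some_lt:
  assumes "rins lt x R = (R', Some y)" "x \<notin> set R"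
  shows "\<exists>j<length R. R!j = y \<and> R' = R[j := x] \<and> lt x y \<and> (\<forall>i<j. lt (R!i) x)"
proof -
  obtain j where j: "j<length R" "R!j = y" "R' = R[j := x]" "lt x y" "\<forall>i<j. \<not> lt x (R!i)"
    using rins_Some[OF assms(1)] by blast
  have "\<forall>i<j. lt (R!i) x" using j(1,5) assms(2) tot by (metis nth_mem order.strict_trans)
  then show ?thesis using j by blast
qed

lemma sorted_nth: "sorted_wrt lt R \<Longrightarrow> i < k \<Longrightarrow> k < length R \<Longrightarrow> lt (R!i) (R!k)"
  by (auto simp: sorted_wrt_iff_nth_less)

lemma colok_upd:
  assumes R: "R \<noteq> []" "sorted_wrt lt R" and j0: "j0 < length R" "R!j0 = y" "lt x y"
    and c: "colok R R2" and ny: "y \<notin> set R2"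
  shows "colok (R[j0 := x]) (fst (rins lt y R2))"
proof -
  obtain R2' d where rd: "rins lt y R2 = (R2', d)" by fastforce
  have cl: "length R2 \<le> length R" "\<And>j. j < length R2 \<Longrightarrow> lt (R!j) (R2!j)" using c by (auto simp: colok_def)
  show ?thesis
  proof (cases d)
    case None
    then have R2': "R2' = R2 @ [y]" "\<And>i. i<length R2 \<Longrightarrow> lt (R2!i) y" using rins_None_lt[of y R2 R2'] rd ny by auto
    have le: "length R2 \<le> j0"
    proof (rule ccontr)
      assume "\<not> length R2 \<le> j0"
      then have "lt y (R2!j0)" "lt (R2!j0) y" using cl(2)[of j0] R2'(2)[of j0] j0 by auto
      then show False using asym by blast
    qed
    have "\<forall>jj<length R2'. lt (R[j0 := x] ! jj) (R2' ! jj)"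
    proof (intro allI impI)
      fix jj assume "jj < length R2'"
      then have "jj < length R2 \<or> jj = length R2" using R2' by auto
      then show "lt (R[j0 := x] ! jj) (R2' ! jj)"
      proof
        assume a: "jj < length R2"
        then show ?thesis using le cl(2)[OF a] R2' by (auto simp: nth_list_update nth_append)
      next
        assume a: "jj = length R2"
        show ?thesis
        proof (cases "jj = j0")
          case True then show ?thesis using a R2' j0 by (auto simp: nth_list_update nth_append)
        next
          case False
          then have "jj < j0" using a le by auto
          then show ?thesis using a R2' j0 sorted_nth[OF R(2), of jj j0] by (auto simp: nth_list_update nth_append)
        qed
      qed
    qed
    then show ?thesis using rd R2' le j0 by (auto simp: colok_def)
  next
    case (Some z)
    then obtain j1 where j1: "j1 < length R2" "R2!j1 = z" "R2' = R2[j1 := y]" "lt y z" "\<forall>i<j1. lt (R2!i) y"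
      using rins_Some_lt[of y R2 R2' z] rd ny by auto
    have le: "j1 \<le> j0"
    proof (rule ccontr)
      assume "\<not> j1 \<le> j0"
      then have "lt y (R2!j0)" "lt (R2!j0) y" using cl(2)[of j0] j1 j0 by auto
      then show False using asym by blast
    qed
    have "\<forall>jj<length R2'. lt (R[j0 := x] ! jj) (R2' ! jj)"
    proof (intro allI impI)
      fix jj assume jl: "jj < length R2'"
      then have jl2: "jj < length R2" using j1 by simp
      show "lt (R[j0 := x] ! jj) (R2' ! jj)"
      proof (cases "jj = j0")
        case True
        show ?thesis
        proof (cases "jj = j1")
          case True then show ?thesis using \<open>jj = j0\<close> j0 j1 by (auto simp: nth_list_update)
        next
          case False
          have "lt y (R2!jj)" using cl(2)[OF jl2] \<open>jj = j0\<close> j0 by simp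
          then have "lt x (R2!jj)" using j0(3) trn by blast
          then show ?thesis using \<open>jj = j0\<close> False j0 j1 by (auto simp: nth_list_update)
        qed
      next
        case False
        show ?thesis
        proof (cases "jj = j1")
          case True
          then have "jj < j0" using le False by auto
          then have "lt (R!jj) y" using sorted_nth[OF R(2), of jj j0] j0 by simp
          then show ?thesis using True False j0 j1 by (auto simp: nth_list_update)
        next
          case False2: False
          show ?thesis using False False2 cl(2)[OF jl2] j0 j1 by (auto simp: nth_list_update)
        qed
      qed
    qed
    then show ?thesis using rd j1 j0 cl(1) by (auto simp: colok_def)
  qed
qed

lemma tins_tabl:
  assumes "tabl T" "x \<notin> set (concat T)" "distinct (concat T)"
  shows "tabl (tins lt x T)"
  using assms
proof (induction T arbitrary: x)
  case Nil then show ?case by simp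
next
  case (Cons R T0)
  obtain R' c where rc: "rins lt x R = (R', c)" by fastforce
  have R: "R \<noteq> []" "sorted_wrt lt R" "tabl T0" and cT: "case T0 of [] \<Rightarrow> True | R2 # _ \<Rightarrow> colok R R2"
    using Cons.prems by auto
  have xR: "x \<notin> set R" using Cons.prems by auto
  show ?case
  proof (cases c)
    case None
    then have R': "R' = R @ [x]" "\<And>i. i<length R \<Longrightarrow> lt (R!i) x" using rins_None_lt[of x R R'] rc xR by auto
    have "case T0 of [] \<Rightarrow> True | R2 # _ \<Rightarrow> colok R' R2"
      using cT R' by (auto simp: colok_def nth_append split: list.splits)
    then show ?thesis using rc None R R' sorted_snoc_lt[OF R(2)] by auto
  next
    case (Some y)
    then obtain j0 where j0: "j0 < length R" "R!j0 = y" "R' = R[j0 := x]" "lt x y" "\<forall>i<j0. lt (R!i) x"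
      using rins_Some_lt[of x R R' y] rc xR by auto
    have yT: "y \<notin> set (concat T0)" "distinct (concat T0)" using Cons.prems j0 by (auto dest: nth_mem)
    have IH: "tabl (tins lt y T0)" using Cons.IH[OF R(3) yT(1,2)] .
    have srt: "sorted_wrt lt R'" using sorted_upd[OF R(2) j0(1)] j0 by simp
    have hd: "case tins lt y T0 of [] \<Rightarrow> True | R2 # _ \<Rightarrow> colok R' R2"
    proof (cases T0)
      case Nil
      have "lt (R'!0) y"
      proof (cases "j0 = 0")
        case True then show ?thesis using j0 by simp
      next
        case False then show ?thesis using j0 sorted_nth[OF R(2), of 0 j0] R by (simp add: nth_list_update)
      qed
      then show ?thesis using Nil R j0 by (auto simp: colok_def)
    next
      case (Cons R2 T1)
      have "colok R R2" using cT Cons by simp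
      moreover have "y \<notin> set R2" using yT Cons by simp
      ultimately have "colok R' (fst (rins lt y R2))" using colok_upd[OF R(1,2) j0(1,2,4)] j0(3) by simp
      then show ?thesis using Cons by (auto split: prod.splits option.splits)
    qed
    show ?thesis using rc Some IH srt hd R j0 by (auto simp: split: list.splits)
  qed
qed

lemma K1:
  assumes "lt x y" "\<forall>c\<in>set b. lt y c" "sorted_wrt lt b"
  shows "knuth lt (y # b @ [x]) (y # x # b)"
  using assms(2,3)
proof (induction b rule: rev_induct)
  case Nil then show ?case by simp
next
  case (snoc c b')
  show ?case
  proof (cases b' rule: rev_cases)
    case Nil
    have "kmove lt ([] @ [y, c, x] @ []) ([] @ [y, x, c] @ [])"
      using kmove_I2[of lt x y c "[]" "[]"] assms(1) snoc.prems by simp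
    then show ?thesis using Nil by simp
  next
    case (snoc b'' d)
    have dc: "lt d c" "lt y d" using snoc.prems \<open>b' = b'' @ [d]\<close> by (auto simp: sorted_wrt_append)
    have xd: "lt x d" using assms(1) dc trn by blast
    have m: "kmove lt ((y # b'') @ [d, c, x] @ []) ((y # b'') @ [d, x, c] @ [])"
      using kmove_I2[of lt x d c "y # b''" "[]"] xd dc by simp
    have "knuth lt (y # b' @ [x]) (y # x # b')"
      using snoc.IH snoc.prems by (auto simp: sorted_wrt_append)
    then have k: "knuth lt ([] @ (y # b' @ [x]) @ [c]) ([] @ (y # x # b') @ [c])"
      by (rule knuth_ctx)
    show ?thesis using m k \<open>b' = b'' @ [d]\<close> by (simp add: converse_rtranclp_into_rtranclp)
  qed
qed

lemma K2:
  assumes "sorted_wrt lt a" "\<forall>c\<in>set a. lt c x" "lt x y"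
  shows "knuth lt (a @ [y, x]) (y # a @ [x])"
  using assms
proof (induction a arbitrary: x rule: rev_induct)
  case Nil then show ?case by simp
next
  case (snoc e a')
  have ex: "lt e x" using snoc.prems by simp
  have m: "kmove lt (a' @ [e, y, x] @ []) (a' @ [y, e, x] @ [])"
    using kmove_I3[of lt e x y a' "[]"] ex snoc.prems(3) by simp
  have "knuth lt (a' @ [y, e]) (y # a' @ [e])"
    using snoc.IH[of e] snoc.prems ex trn by (auto simp: sorted_wrt_append)
  then have k: "knuth lt ([] @ (a' @ [y, e]) @ [x]) ([] @ (y # a' @ [e]) @ [x])"
    by (rule knuth_ctx)
  show ?case using m k by (simp add: converse_rtranclp_into_rtranclp)
qed

lemma row_knuth:
  assumes "sorted_wrt lt R" "x \<notin> set R" "rins lt x R = (R', Some y)"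
  shows "knuth lt (R @ [x]) (y # R')"
proof -
  obtain j where j: "j<length R" "R!j = y" "R' = R[j := x]" "lt x y" "\<forall>i<j. lt (R!i) x"
    using rins_Some_lt[OF assms(3,2)] by blast
  define a where "a = take j R"
  define b where "b = drop (Suc j) R"
  have R: "R = a @ y # b" using id_take_nth_drop[OF j(1)] j(2) unfolding a_def b_def by simp
  have R': "R' = a @ x # b" using j unfolding a_def b_def by (simp add: upd_conv_take_nth_drop)
  have sa: "sorted_wrt lt a" "sorted_wrt lt b" "\<forall>c\<in>set b. lt y c"
    using assms(1) R by (auto simp: sorted_wrt_append)
  have ax: "\<forall>c\<in>set a. lt c x" using j(5) unfolding a_def by (auto simp: in_set_conv_nth)
  have k1: "knuth lt (a @ (y # b @ [x]) @ []) (a @ (y # x # b) @ [])"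
    by (rule knuth_ctx, rule K1[OF j(4) sa(3,2)])
  have k2: "knuth lt ([] @ (a @ [y, x]) @ b) ([] @ (y # a @ [x]) @ b)"
    by (rule knuth_ctx, rule K2[OF sa(1) ax j(4)])
  show ?thesis using k1 k2 R R' by (simp add: rtranclp_trans)
qed


lemma tins_knuth:
  assumes "\<forall>R\<in>set T. sorted_wrt lt R" "x \<notin> set (concat T)" "distinct (concat T)"
  shows "knuth lt (rd (tins lt x T)) (rd T @ [x])"
  using assms
proof (induction T arbitrary: x)
  case Nil then show ?case by (simp add: rd_def)
next
  case (Cons R T0)
  obtain R' c where rc: "rins lt x R = (R', c)" by fastforce
  have xR: "x \<notin> set R" using Cons.prems by auto
  show ?case
  proof (cases c)
    case None
    then have "R' = R @ [x]" using rins_None_lt[of x R R'] rc xR by auto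
    then show ?thesis using rc None by (simp add: rd_def)
  next
    case (Some y)
    have yR: "y \<in> set R" using rins_Some_lt[of x R R' y] rc xR Some by (auto dest: nth_mem)
    have yT: "y \<notin> set (concat T0)" "distinct (concat T0)" using Cons.prems yR by auto
    have IH: "knuth lt (rd (tins lt y T0)) (rd T0 @ [y])" using Cons.IH yT Cons.prems by auto
    have k1: "knuth lt ((rd (tins lt y T0)) @ R' @ []) ((rd T0 @ [y]) @ R' @ [])"
      using knuth_ctx[OF IH, of "[]" "R'"] by simp
    have k2: "knuth lt (rd T0 @ (R @ [x]) @ []) (rd T0 @ (y # R') @ [])"
      by (rule knuth_ctx, rule row_knuth[of R x R' y]) (use Cons.prems xR rc Some in auto)
    have "knuth lt (rd (tins lt x (R # T0))) (rd T0 @ y # R')"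
      using k1 rc Some by (simp add: rd_def)
    moreover have "knuth lt (rd T0 @ y # R') (rd (R # T0) @ [x])"
      using knuth_sym[OF k2] by (simp add: rd_def)
    ultimately show ?thesis by (rule rtranclp_trans)
  qed
qed

lemma tabl_sorted: "tabl T \<Longrightarrow> \<forall>R\<in>set T. sorted_wrt lt R"
  by (induction T) auto

lemma rsk_props:
  assumes "distinct w"
  shows "tabl (rsk lt w) \<and> knuth lt (rd (rsk lt w)) w"
  using assms
proof (induction w rule: rev_induct)
  case Nil then show ?case by (simp add: rd_def)
next
  case (snoc x w)
  have IH: "tabl (rsk lt w)" "knuth lt (rd (rsk lt w)) w" using snoc by auto
  have m: "mset (concat (rsk lt w)) = mset w" by (rule rsk_mset)
  have se: "set (concat (rsk lt w)) = set w" by (metis m set_mset_mset)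
  have d: "distinct (concat (rsk lt w))" "x \<notin> set (concat (rsk lt w))"
    using mset_eq_imp_distinct_iff[OF m] snoc.prems se by simp_all
  have t: "tabl (rsk lt (w @ [x]))" using tins_tabl[OF IH(1) d(2,1)] by (simp add: rsk_snoc)
  have "knuth lt (rd (rsk lt (w @ [x]))) (rd (rsk lt w) @ [x])"
    using tins_knuth[OF tabl_sorted[OF IH(1)] d(2,1)] by (simp add: rsk_snoc)
  moreover have "knuth lt ([] @ rd (rsk lt w) @ [x]) ([] @ w @ [x])" by (rule knuth_ctx[OF IH(2)])
  ultimately show ?case using t by (simp add: rtranclp_trans)
qed

end

section \<open>Greene invariants\<close>

definition chn :: "('a \<Rightarrow> 'a \<Rightarrow> bool) \<Rightarrow> 'a list \<Rightarrow> 'a set \<Rightarrow> bool" where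
  "chn lt u S \<longleftrightarrow> sorted_wrt lt (filter (\<lambda>a. a \<in> S) u)"

definition cov :: "('a \<Rightarrow> 'a \<Rightarrow> bool) \<Rightarrow> nat \<Rightarrow> 'a list \<Rightarrow> 'a set \<Rightarrow> bool" where
  "cov lt k u T \<longleftrightarrow> (\<exists>f. (\<forall>i<k. chn lt u (f i)) \<and> T = set u \<inter> (\<Union>i<k. f i))"

definition gI :: "('a \<Rightarrow> 'a \<Rightarrow> bool) \<Rightarrow> nat \<Rightarrow> 'a list \<Rightarrow> nat" where
  "gI lt k u = Max (card ` {T. cov lt k u T})"

lemma chn_subset: "chn lt u S \<Longrightarrow> S' \<subseteq> S \<Longrightarrow> chn lt u S'"
proof -
  assume a: "chn lt u S" "S' \<subseteq> S"
  have "filter (\<lambda>a. a \<in> S') u = filter (\<lambda>a. a \<in> S') (filter (\<lambda>a. a \<in> S) u)"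
    using a(2) by (auto simp: filter_filter intro: filter_cong)
  moreover have "sorted_wrt lt (filter (\<lambda>a. a \<in> S') (filter (\<lambda>a. a \<in> S) u))"
    using a(1) unfolding chn_def by (rule sorted_wrt_filter)
  ultimately show ?thesis unfolding chn_def by simp
qed

lemma cov_fin: "finite {T. cov lt k u T}"
proof -
  have "{T. cov lt k u T} \<subseteq> Pow (set u)" by (auto simp: cov_def)
  then show ?thesis by (rule finite_subset) simp
qed

lemma cov_empty: "cov lt k u {}"
  unfolding cov_def by (rule exI[of _ "\<lambda>_. {}"]) (simp add: chn_def)

lemma cov_card_le: "cov lt k u T \<Longrightarrow> card T \<le> gI lt k u"
  unfolding gI_def using cov_fin by (intro Max_ge) auto

lemma gI_attained: "\<exists>T. cov lt k u T \<and> card T = gI lt k u"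
proof -
  have "gI lt k u \<in> card ` {T. cov lt k u T}"
    unfolding gI_def using cov_fin[of lt k u] cov_empty[of lt k u] by (intro Max_in) auto
  then show ?thesis by auto
qed

lemma gI_le:
  assumes "\<And>T. cov lt k u T \<Longrightarrow> \<exists>T'. cov lt' k u' T' \<and> card T \<le> card T'"
  shows "gI lt k u \<le> gI lt' k u'"
proof -
  obtain T where "cov lt k u T" "card T = gI lt k u" using gI_attained by blast
  then obtain T' where "cov lt' k u' T'" "gI lt k u \<le> card T'" using assms by fastforce
  then show ?thesis using cov_card_le order.trans by blast
qed

lemma cov_disj:
  assumes "cov lt k u T"
  shows "\<exists>f. (\<forall>i<k. chn lt u (f i)) \<and> T = set u \<inter> (\<Union>i<k. f i) \<and> (\<forall>i<k. \<forall>j<k. i \<noteq> j \<longrightarrow> f i \<inter> f j = {})"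
proof -
  obtain f where f: "\<forall>i<k. chn lt u (f i)" "T = set u \<inter> (\<Union>i<k. f i)" using assms by (auto simp: cov_def)
  define g where "g i = f i - (\<Union>j<i. f j)" for i
  have c: "\<forall>i<k. chn lt u (g i)" using f(1) chn_subset unfolding g_def by blast
  have u: "(\<Union>i<k. g i) = (\<Union>i<k. f i)"
  proof
    show "(\<Union>i<k. g i) \<subseteq> (\<Union>i<k. f i)" unfolding g_def by auto
  next
    show "(\<Union>i<k. f i) \<subseteq> (\<Union>i<k. g i)"
    proof
      fix a assume "a \<in> (\<Union>i<k. f i)"
      then obtain i where i: "i < k" "a \<in> f i" by auto
      define i0 where "i0 = (LEAST i. a \<in> f i)"
      have "a \<in> f i0" using i(2) unfolding i0_def by (rule LeastI)
      moreover have "i0 \<le> i" using i(2) unfolding i0_def by (rule Least_le)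
      moreover have "\<forall>j<i0. a \<notin> f j" unfolding i0_def using not_less_Least by blast
      ultimately show "a \<in> (\<Union>i<k. g i)" using i(1) unfolding g_def by auto
    qed
  qed
  have d: "\<forall>i<k. \<forall>j<k. i \<noteq> j \<longrightarrow> g i \<inter> g j = {}"
  proof (intro allI impI)
    fix i j assume "i < k" "j < k" "i \<noteq> j"
    then show "g i \<inter> g j = {}" unfolding g_def by (cases "i < j") auto
  qed
  show ?thesis using c u d f(2) by (intro exI[of _ g]) auto
qed

lemma cov_repair:
  assumes set_eq: "set u' = set u" and xyz: "y \<in> set u" "x \<in> set u" "z \<in> set u"
    and F0: "\<And>S. chn lt u S \<Longrightarrow> x \<in> S \<Longrightarrow> z \<in> S \<Longrightarrow> y \<notin> S"
    and F1: "\<And>S. chn lt u S \<Longrightarrow> \<not> (x \<in> S \<and> z \<in> S) \<Longrightarrow> chn lt u' S"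
    and F2: "\<And>S. chn lt u S \<Longrightarrow> x \<in> S \<Longrightarrow> z \<in> S \<Longrightarrow> \<exists>v\<in>{x, z}. chn lt u' (insert y (S - {v}))"
    and F3: "\<And>S1 S2. chn lt u S1 \<Longrightarrow> chn lt u S2 \<Longrightarrow> x \<in> S1 \<Longrightarrow> z \<in> S1 \<Longrightarrow> y \<in> S2 \<Longrightarrow> x \<notin> S2 \<Longrightarrow> z \<notin> S2
        \<Longrightarrow> \<exists>S1' S2'. chn lt u' S1' \<and> chn lt u' S2' \<and> (S1 \<union> S2) \<inter> set u \<subseteq> S1' \<union> S2'"
    and cv: "cov lt k u T"
  shows "\<exists>T'. cov lt k u' T' \<and> card T \<le> card T'"
proof -
  obtain f where f: "\<forall>i<k. chn lt u (f i)" "T = set u \<inter> (\<Union>i<k. f i)"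
    "\<forall>i<k. \<forall>j<k. i \<noteq> j \<longrightarrow> f i \<inter> f j = {}" using cov_disj[OF cv] by blast
  have finT: "finite T" using f(2) by simp
  show ?thesis
  proof (cases "\<exists>i<k. x \<in> f i \<and> z \<in> f i")
    case False
    then have "\<forall>i<k. chn lt u' (f i)" using F1 f(1) by blast
    then have "cov lt k u' T" using f(2) set_eq unfolding cov_def by auto
    then show ?thesis by blast
  next
    case True
    then obtain i0 where i0: "i0 < k" "x \<in> f i0" "z \<in> f i0" by blast
    have other: "\<forall>i<k. i \<noteq> i0 \<longrightarrow> chn lt u' (f i)"
    proof (intro allI impI)
      fix i assume "i < k" "i \<noteq> i0"
      then have "x \<notin> f i" using f(3) i0 by blast
      then show "chn lt u' (f i)" using F1 f(1) \<open>i < k\<close> by blast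
    qed
    show ?thesis
    proof (cases "\<exists>j<k. y \<in> f j")
      case True
      then obtain j0 where j0: "j0 < k" "y \<in> f j0" by blast
      have "y \<notin> f i0" using F0[OF f(1)[rule_format, OF i0(1)] i0(2,3)] .
      then have ne: "j0 \<noteq> i0" using j0(2) by metis
      have "f i0 \<inter> f j0 = {}" using f(3) i0(1) j0(1) ne by metis
      then have "x \<notin> f j0" "z \<notin> f j0" using i0 by blast+
      then obtain S1' S2' where S: "chn lt u' S1'" "chn lt u' S2'" "(f i0 \<union> f j0) \<inter> set u \<subseteq> S1' \<union> S2'"
        using F3[OF f(1)[rule_format, OF i0(1)] f(1)[rule_format, OF j0(1)] i0(2,3) j0(2)] by blast
      define g where "g = (f(i0 := S1'))(j0 := S2')"
      have gc: "\<forall>i<k. chn lt u' (g i)" using other S ne unfolding g_def by auto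
      define T' where "T' = set u' \<inter> (\<Union>i<k. g i)"
      have "T \<subseteq> T'"
      proof
        fix t assume "t \<in> T"
        then obtain i where i: "i < k" "t \<in> f i" "t \<in> set u" using f(2) by auto
        show "t \<in> T'"
        proof (cases "i = i0 \<or> i = j0")
          case True
          then have "t \<in> S1' \<union> S2'" using S(3) i by auto
          moreover have "g i0 = S1'" "g j0 = S2'" using ne unfolding g_def by auto
          ultimately have "t \<in> g i0 \<or> t \<in> g j0" by simp
          then show ?thesis using i0(1) j0(1) i(3) set_eq unfolding T'_def by blast
        next
          case False
          then show ?thesis using i set_eq unfolding T'_def g_def by auto
        qed
      qed
      moreover have "finite T'" unfolding T'_def by simp
      ultimately have "card T \<le> card T'" by (rule card_mono[rotated])
      moreover have "cov lt k u' T'" using gc unfolding cov_def T'_def by (intro exI[of _ g]) simp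
      ultimately show ?thesis by blast
    next
      case False
      obtain v where v: "v \<in> {x, z}" "chn lt u' (insert y (f i0 - {v}))"
        using F2[OF f(1)[rule_format, OF i0(1)] i0(2,3)] by blast
      define g where "g = f(i0 := insert y (f i0 - {v}))"
      have gc: "\<forall>i<k. chn lt u' (g i)" using other v unfolding g_def by auto
      define T' where "T' = set u' \<inter> (\<Union>i<k. g i)"
      have yT: "y \<notin> T" using False f(2) by auto
      have vT: "v \<in> T" using v(1) i0 xyz f(2) by auto
      have sub: "insert y (T - {v}) \<subseteq> T'"
      proof
        fix t assume "t \<in> insert y (T - {v})"
        then show "t \<in> T'"
        proof
          assume "t = y" then show ?thesis using xyz set_eq i0 unfolding T'_def g_def by auto
        next
          assume "t \<in> T - {v}"
          then obtain i where i: "i < k" "t \<in> f i" "t \<in> set u" "t \<noteq> v" using f(2) by auto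
          then show ?thesis using set_eq i0 unfolding T'_def g_def by (cases "i = i0") auto
        qed
      qed
      have "card T > 0" using vT finT card_gt_0_iff by blast
      then have "card (insert y (T - {v})) = card T" using yT vT finT
        by (simp add: card_Diff_singleton)
      moreover have "card (insert y (T - {v})) \<le> card T'" using sub unfolding T'_def by (intro card_mono) auto
      moreover have "cov lt k u' T'" using gc unfolding cov_def T'_def by blast
      ultimately show ?thesis by auto
    qed
  qed
qed

lemma cov_mono_chn:
  assumes "set u' = set u" "\<And>S. chn lt u S \<Longrightarrow> chn lt u' S" "cov lt k u T"
  shows "\<exists>T'. cov lt k u' T' \<and> card T \<le> card T'"
proof -
  obtain f where "\<forall>i<k. chn lt u (f i)" "T = set u \<inter> (\<Union>i<k. f i)" using assms(3) unfolding cov_def by auto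
  then have "cov lt k u' T" using assms(1,2) unfolding cov_def by (intro exI[of _ f]) simp
  then show ?thesis by blast
qed

context sto
begin

lemma chn_split:
  "chn lt (p @ m @ q) S \<longleftrightarrow> sorted_wrt lt (filter (\<lambda>a. a \<in> S) p @ filter (\<lambda>a. a \<in> S) m @ filter (\<lambda>a. a \<in> S) q)"
  unfolding chn_def by simp

lemma chn_mid: "chn lt (p @ m @ q) S \<Longrightarrow> sorted_wrt lt (filter (\<lambda>a. a \<in> S) m)"
  unfolding chn_def filter_append sorted_wrt_append by simp

lemma chn_cong3: "filter (\<lambda>a. a \<in> S) m = filter (\<lambda>a. a \<in> S) m' \<Longrightarrow> chn lt (p @ m @ q) S = chn lt (p @ m' @ q) S"
  unfolding chn_def filter_append by simp

lemma chn_of: "filter (\<lambda>a. a \<in> S) p = A \<Longrightarrow> filter (\<lambda>a. a \<in> S) m = M \<Longrightarrow> filter (\<lambda>a. a \<in> S) q = B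
   \<Longrightarrow> sorted_wrt lt (A @ M @ B) \<Longrightarrow> chn lt (p @ m @ q) S"
  unfolding chn_def filter_append by simp

lemma fl_agree: "(\<And>a. a \<in> set l \<Longrightarrow> a \<in> S \<longleftrightarrow> a \<in> S') \<Longrightarrow> filter (\<lambda>a. a \<in> S) l = filter (\<lambda>a. a \<in> S') l"
  by (rule filter_cong) auto

lemma abs_t2:
  assumes "sorted_wrt lt (A1 @ [x, z] @ B1)" "sorted_wrt lt (A2 @ [y] @ B2)" "lt x y" "lt y z"
  shows "sorted_wrt lt (A2 @ [y, z] @ B1) \<and> sorted_wrt lt (A1 @ [x] @ B2)"
  using assms by (simp add: sorted_wrt_append) (meson trn)

lemma abs_t1:
  assumes "sorted_wrt lt (A1 @ [x, z] @ B1)" "sorted_wrt lt (A2 @ [y] @ B2)" "lt x y" "lt y z"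
  shows "sorted_wrt lt (A1 @ [x, y] @ B2) \<and> sorted_wrt lt (A2 @ [z] @ B1)"
  using assms by (simp add: sorted_wrt_append) (meson trn)

lemma abs_f2_t2:
  assumes "sorted_wrt lt (A @ [x, z] @ B)" "lt x y" "lt y z"
  shows "sorted_wrt lt (A @ [y, z] @ B)"
  using assms by (simp add: sorted_wrt_append) (meson trn)

lemma abs_f2_t1:
  assumes "sorted_wrt lt (A @ [x, z] @ B)" "lt x y" "lt y z"
  shows "sorted_wrt lt (A @ [x, y] @ B)"
  using assms by (simp add: sorted_wrt_append) (meson trn)

lemma greene_t2:
  assumes d: "distinct (p @ [y, x, z] @ q)" and o: "lt x y" "lt y z"
    and cv: "cov lt k (p @ [y, x, z] @ q) T"
  shows "\<exists>T'. cov lt k (p @ [y, z, x] @ q) T' \<and> card T \<le> card T'"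
proof (rule cov_repair[OF _ _ _ _ _ _ _ _ cv])
  show "set (p @ [y, z, x] @ q) = set (p @ [y, x, z] @ q)" by auto
  show "y \<in> set (p @ [y, x, z] @ q)" "x \<in> set (p @ [y, x, z] @ q)" "z \<in> set (p @ [y, x, z] @ q)" by auto
  have D: "distinct p" "distinct q" "y \<notin> set p" "x \<notin> set p" "z \<notin> set p" "y \<notin> set q" "x \<notin> set q" "z \<notin> set q"
    "set p \<inter> set q = {}" "x \<noteq> y" "x \<noteq> z" "y \<noteq> z" using d by auto
  show F0: "\<And>S. chn lt (p @ [y, x, z] @ q) S \<Longrightarrow> x \<in> S \<Longrightarrow> z \<in> S \<Longrightarrow> y \<notin> S"
  proof
    fix S assume "chn lt (p @ [y, x, z] @ q) S" "x \<in> S" "z \<in> S" "y \<in> S"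
    then have "lt y x" using chn_mid[of p "[y, x, z]" q S] by simp
    then show False using o asym by blast
  qed
  show "\<And>S. chn lt (p @ [y, x, z] @ q) S \<Longrightarrow> \<not> (x \<in> S \<and> z \<in> S) \<Longrightarrow> chn lt (p @ [y, z, x] @ q) S"
  proof -
    fix S assume "chn lt (p @ [y, x, z] @ q) S" "\<not> (x \<in> S \<and> z \<in> S)"
    moreover have "filter (\<lambda>a. a \<in> S) [y, x, z] = filter (\<lambda>a. a \<in> S) [y, z, x]" using calculation(2) by auto
    ultimately show "chn lt (p @ [y, z, x] @ q) S" using chn_cong3 by metis
  qed
  show "\<And>S. chn lt (p @ [y, x, z] @ q) S \<Longrightarrow> x \<in> S \<Longrightarrow> z \<in> S \<Longrightarrow> \<exists>v\<in>{x, z}. chn lt (p @ [y, z, x] @ q) (insert y (S - {v}))"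
  proof -
    fix S assume c: "chn lt (p @ [y, x, z] @ q) S" "x \<in> S" "z \<in> S"
    have yS: "y \<notin> S" using F0 c by blast
    define S' where "S' = insert y (S - {x})"
    have e1: "filter (\<lambda>a. a \<in> S') p = filter (\<lambda>a. a \<in> S) p" using D unfolding S'_def by (intro fl_agree) auto
    have e2: "filter (\<lambda>a. a \<in> S') q = filter (\<lambda>a. a \<in> S) q" using D unfolding S'_def by (intro fl_agree) auto
    have e3: "filter (\<lambda>a. a \<in> S') [y, z, x] = [y, z]" using D c unfolding S'_def by auto
    have "sorted_wrt lt (filter (\<lambda>a. a \<in> S) p @ [x, z] @ filter (\<lambda>a. a \<in> S) q)"
      using c yS unfolding chn_def by simp
    then have "sorted_wrt lt (filter (\<lambda>a. a \<in> S) p @ [y, z] @ filter (\<lambda>a. a \<in> S) q)"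
      using abs_f2_t2 o by blast
    then have "chn lt (p @ [y, z, x] @ q) S'" by (rule chn_of[OF e1 e3 e2])
    then show "\<exists>v\<in>{x, z}. chn lt (p @ [y, z, x] @ q) (insert y (S - {v}))" unfolding S'_def by blast
  qed
  show "\<And>S1 S2. chn lt (p @ [y, x, z] @ q) S1 \<Longrightarrow> chn lt (p @ [y, x, z] @ q) S2 \<Longrightarrow> x \<in> S1 \<Longrightarrow> z \<in> S1 \<Longrightarrow>
      y \<in> S2 \<Longrightarrow> x \<notin> S2 \<Longrightarrow> z \<notin> S2 \<Longrightarrow>
      \<exists>S1' S2'. chn lt (p @ [y, z, x] @ q) S1' \<and> chn lt (p @ [y, z, x] @ q) S2' \<and>
        (S1 \<union> S2) \<inter> set (p @ [y, x, z] @ q) \<subseteq> S1' \<union> S2'"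
  proof -
    fix S1 S2 assume c: "chn lt (p @ [y, x, z] @ q) S1" "chn lt (p @ [y, x, z] @ q) S2" "x \<in> S1" "z \<in> S1"
      "y \<in> S2" "x \<notin> S2" "z \<notin> S2"
    have yS: "y \<notin> S1" using F0 c by blast
    define S1' where "S1' = (S2 \<inter> set p) \<union> {y, z} \<union> (S1 \<inter> set q)"
    define S2' where "S2' = (S1 \<inter> set p) \<union> {x} \<union> (S2 \<inter> set q)"
    have h1: "sorted_wrt lt (filter (\<lambda>a. a \<in> S1) p @ [x, z] @ filter (\<lambda>a. a \<in> S1) q)"
      using c yS unfolding chn_def by simp
    have h2: "sorted_wrt lt (filter (\<lambda>a. a \<in> S2) p @ [y] @ filter (\<lambda>a. a \<in> S2) q)"
      using c unfolding chn_def by simp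
    have a1: "filter (\<lambda>a. a \<in> S1') p = filter (\<lambda>a. a \<in> S2) p" using D unfolding S1'_def by (intro fl_agree) auto
    have a2: "filter (\<lambda>a. a \<in> S1') q = filter (\<lambda>a. a \<in> S1) q" using D unfolding S1'_def by (intro fl_agree) auto
    have a3: "filter (\<lambda>a. a \<in> S1') [y, z, x] = [y, z]" using D unfolding S1'_def by auto
    have b1: "filter (\<lambda>a. a \<in> S2') p = filter (\<lambda>a. a \<in> S1) p" using D unfolding S2'_def by (intro fl_agree) auto
    have b2: "filter (\<lambda>a. a \<in> S2') q = filter (\<lambda>a. a \<in> S2) q" using D unfolding S2'_def by (intro fl_agree) auto
    have b3: "filter (\<lambda>a. a \<in> S2') [y, z, x] = [x]" using D unfolding S2'_def by auto
    have s: "sorted_wrt lt (filter (\<lambda>a. a \<in> S2) p @ [y, z] @ filter (\<lambda>a. a \<in> S1) q)"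
       "sorted_wrt lt (filter (\<lambda>a. a \<in> S1) p @ [x] @ filter (\<lambda>a. a \<in> S2) q)"
      using abs_t2[OF h1 h2 o] by auto
    have "chn lt (p @ [y, z, x] @ q) S1'" by (rule chn_of[OF a1 a3 a2 s(1)])
    moreover have "chn lt (p @ [y, z, x] @ q) S2'" by (rule chn_of[OF b1 b3 b2 s(2)])
    moreover have "(S1 \<union> S2) \<inter> set (p @ [y, x, z] @ q) \<subseteq> S1' \<union> S2'"
      using c unfolding S1'_def S2'_def by auto
    ultimately show "\<exists>S1' S2'. chn lt (p @ [y, z, x] @ q) S1' \<and> chn lt (p @ [y, z, x] @ q) S2' \<and>
        (S1 \<union> S2) \<inter> set (p @ [y, x, z] @ q) \<subseteq> S1' \<union> S2'" by blast
  qed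
qed

lemma greene_t1:
  assumes d: "distinct (p @ [x, z, y] @ q)" and o: "lt x y" "lt y z"
    and cv: "cov lt k (p @ [x, z, y] @ q) T"
  shows "\<exists>T'. cov lt k (p @ [z, x, y] @ q) T' \<and> card T \<le> card T'"
proof (rule cov_repair[OF _ _ _ _ _ _ _ _ cv])
  show "set (p @ [z, x, y] @ q) = set (p @ [x, z, y] @ q)" by auto
  show "y \<in> set (p @ [x, z, y] @ q)" "x \<in> set (p @ [x, z, y] @ q)" "z \<in> set (p @ [x, z, y] @ q)" by auto
  have D: "distinct p" "distinct q" "y \<notin> set p" "x \<notin> set p" "z \<notin> set p" "y \<notin> set q" "x \<notin> set q" "z \<notin> set q"
    "set p \<inter> set q = {}" "x \<noteq> y" "x \<noteq> z" "y \<noteq> z" using d by auto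
  show F0: "\<And>S. chn lt (p @ [x, z, y] @ q) S \<Longrightarrow> x \<in> S \<Longrightarrow> z \<in> S \<Longrightarrow> y \<notin> S"
  proof
    fix S assume "chn lt (p @ [x, z, y] @ q) S" "x \<in> S" "z \<in> S" "y \<in> S"
    then have "lt z y" using chn_mid[of p "[x, z, y]" q S] by simp
    then show False using o asym by blast
  qed
  show "\<And>S. chn lt (p @ [x, z, y] @ q) S \<Longrightarrow> \<not> (x \<in> S \<and> z \<in> S) \<Longrightarrow> chn lt (p @ [z, x, y] @ q) S"
  proof -
    fix S assume "chn lt (p @ [x, z, y] @ q) S" "\<not> (x \<in> S \<and> z \<in> S)"
    moreover have "filter (\<lambda>a. a \<in> S) [x, z, y] = filter (\<lambda>a. a \<in> S) [z, x, y]" using calculation(2) by auto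
    ultimately show "chn lt (p @ [z, x, y] @ q) S" using chn_cong3 by metis
  qed
  show "\<And>S. chn lt (p @ [x, z, y] @ q) S \<Longrightarrow> x \<in> S \<Longrightarrow> z \<in> S \<Longrightarrow> \<exists>v\<in>{x, z}. chn lt (p @ [z, x, y] @ q) (insert y (S - {v}))"
  proof -
    fix S assume c: "chn lt (p @ [x, z, y] @ q) S" "x \<in> S" "z \<in> S"
    have yS: "y \<notin> S" using F0 c by blast
    define S' where "S' = insert y (S - {z})"
    have e1: "filter (\<lambda>a. a \<in> S') p = filter (\<lambda>a. a \<in> S) p" using D unfolding S'_def by (intro fl_agree) auto
    have e2: "filter (\<lambda>a. a \<in> S') q = filter (\<lambda>a. a \<in> S) q" using D unfolding S'_def by (intro fl_agree) auto
    have e3: "filter (\<lambda>a. a \<in> S') [z, x, y] = [x, y]" using D c unfolding S'_def by auto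
    have "sorted_wrt lt (filter (\<lambda>a. a \<in> S) p @ [x, z] @ filter (\<lambda>a. a \<in> S) q)"
      using c yS unfolding chn_def by simp
    then have "sorted_wrt lt (filter (\<lambda>a. a \<in> S) p @ [x, y] @ filter (\<lambda>a. a \<in> S) q)"
      using abs_f2_t1 o by blast
    then have "chn lt (p @ [z, x, y] @ q) S'" by (rule chn_of[OF e1 e3 e2])
    then show "\<exists>v\<in>{x, z}. chn lt (p @ [z, x, y] @ q) (insert y (S - {v}))" unfolding S'_def by blast
  qed
  show "\<And>S1 S2. chn lt (p @ [x, z, y] @ q) S1 \<Longrightarrow> chn lt (p @ [x, z, y] @ q) S2 \<Longrightarrow> x \<in> S1 \<Longrightarrow> z \<in> S1 \<Longrightarrow>
      y \<in> S2 \<Longrightarrow> x \<notin> S2 \<Longrightarrow> z \<notin> S2 \<Longrightarrow>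
      \<exists>S1' S2'. chn lt (p @ [z, x, y] @ q) S1' \<and> chn lt (p @ [z, x, y] @ q) S2' \<and>
        (S1 \<union> S2) \<inter> set (p @ [x, z, y] @ q) \<subseteq> S1' \<union> S2'"
  proof -
    fix S1 S2 assume c: "chn lt (p @ [x, z, y] @ q) S1" "chn lt (p @ [x, z, y] @ q) S2" "x \<in> S1" "z \<in> S1"
      "y \<in> S2" "x \<notin> S2" "z \<notin> S2"
    have yS: "y \<notin> S1" using F0 c by blast
    define S1' where "S1' = (S1 \<inter> set p) \<union> {x, y} \<union> (S2 \<inter> set q)"
    define S2' where "S2' = (S2 \<inter> set p) \<union> {z} \<union> (S1 \<inter> set q)"
    have h1: "sorted_wrt lt (filter (\<lambda>a. a \<in> S1) p @ [x, z] @ filter (\<lambda>a. a \<in> S1) q)"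
      using c yS unfolding chn_def by simp
    have h2: "sorted_wrt lt (filter (\<lambda>a. a \<in> S2) p @ [y] @ filter (\<lambda>a. a \<in> S2) q)"
      using c unfolding chn_def by simp
    have a1: "filter (\<lambda>a. a \<in> S1') p = filter (\<lambda>a. a \<in> S1) p" using D unfolding S1'_def by (intro fl_agree) auto
    have a2: "filter (\<lambda>a. a \<in> S1') q = filter (\<lambda>a. a \<in> S2) q" using D unfolding S1'_def by (intro fl_agree) auto
    have a3: "filter (\<lambda>a. a \<in> S1') [z, x, y] = [x, y]" using D unfolding S1'_def by auto
    have b1: "filter (\<lambda>a. a \<in> S2') p = filter (\<lambda>a. a \<in> S2) p" using D unfolding S2'_def by (intro fl_agree) auto
    have b2: "filter (\<lambda>a. a \<in> S2') q = filter (\<lambda>a. a \<in> S1) q" using D unfolding S2'_def by (intro fl_agree) auto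
    have b3: "filter (\<lambda>a. a \<in> S2') [z, x, y] = [z]" using D unfolding S2'_def by auto
    have s: "sorted_wrt lt (filter (\<lambda>a. a \<in> S1) p @ [x, y] @ filter (\<lambda>a. a \<in> S2) q)"
       "sorted_wrt lt (filter (\<lambda>a. a \<in> S2) p @ [z] @ filter (\<lambda>a. a \<in> S1) q)"
      using abs_t1[OF h1 h2 o] by auto
    have "chn lt (p @ [z, x, y] @ q) S1'" by (rule chn_of[OF a1 a3 a2 s(1)])
    moreover have "chn lt (p @ [z, x, y] @ q) S2'" by (rule chn_of[OF b1 b3 b2 s(2)])
    moreover have "(S1 \<union> S2) \<inter> set (p @ [x, z, y] @ q) \<subseteq> S1' \<union> S2'"
      using c unfolding S1'_def S2'_def by auto
    ultimately show "\<exists>S1' S2'. chn lt (p @ [z, x, y] @ q) S1' \<and> chn lt (p @ [z, x, y] @ q) S2' \<and>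
        (S1 \<union> S2) \<inter> set (p @ [x, z, y] @ q) \<subseteq> S1' \<union> S2'" by blast
  qed
qed

lemma greene_r2:
  assumes o: "lt x y" "lt y z" and cv: "cov lt k (p @ [y, z, x] @ q) T"
  shows "\<exists>T'. cov lt k (p @ [y, x, z] @ q) T' \<and> card T \<le> card T'"
proof (rule cov_mono_chn[OF _ _ cv])
  show "set (p @ [y, x, z] @ q) = set (p @ [y, z, x] @ q)" by auto
  fix S assume c: "chn lt (p @ [y, z, x] @ q) S"
  have "\<not> (x \<in> S \<and> z \<in> S)"
  proof
    assume "x \<in> S \<and> z \<in> S"
    then have "lt z x" using chn_mid[OF c] by (cases "y \<in> S") auto
    then show False using o asym trn by blast
  qed
  then have "filter (\<lambda>a. a \<in> S) [y, z, x] = filter (\<lambda>a. a \<in> S) [y, x, z]" by auto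
  then show "chn lt (p @ [y, x, z] @ q) S" using c chn_cong3 by metis
qed

lemma greene_r1:
  assumes o: "lt x y" "lt y z" and cv: "cov lt k (p @ [z, x, y] @ q) T"
  shows "\<exists>T'. cov lt k (p @ [x, z, y] @ q) T' \<and> card T \<le> card T'"
proof (rule cov_mono_chn[OF _ _ cv])
  show "set (p @ [x, z, y] @ q) = set (p @ [z, x, y] @ q)" by auto
  fix S assume c: "chn lt (p @ [z, x, y] @ q) S"
  have "\<not> (x \<in> S \<and> z \<in> S)"
  proof
    assume "x \<in> S \<and> z \<in> S"
    then have "lt z x" using chn_mid[OF c] by (cases "y \<in> S") auto
    then show False using o asym trn by blast
  qed
  then have "filter (\<lambda>a. a \<in> S) [z, x, y] = filter (\<lambda>a. a \<in> S) [x, z, y]" by auto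
  then show "chn lt (p @ [x, z, y] @ q) S" using c chn_cong3 by metis
qed

lemma kmove_cov:
  assumes "kmove lt w w'" "distinct w" "cov lt k w T"
  shows "\<exists>T'. cov lt k w' T' \<and> card T \<le> card T'"
proof -
  obtain u v x y z where o: "lt x y" "lt y z" and c:
     "(w = u @ [y, x, z] @ v \<and> w' = u @ [y, z, x] @ v) \<or>
      (w = u @ [y, z, x] @ v \<and> w' = u @ [y, x, z] @ v) \<or>
      (w = u @ [x, z, y] @ v \<and> w' = u @ [z, x, y] @ v) \<or>
      (w = u @ [z, x, y] @ v \<and> w' = u @ [x, z, y] @ v)" using assms(1) unfolding kmove_def by blast
  show ?thesis using c
  proof (elim disjE conjE)
    assume "w = u @ [y, x, z] @ v" "w' = u @ [y, z, x] @ v"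
    then show ?thesis using greene_t2[OF _ o] assms(2,3) by simp
  next
    assume "w = u @ [y, z, x] @ v" "w' = u @ [y, x, z] @ v"
    then show ?thesis using greene_r2[OF o] assms(3) by simp
  next
    assume "w = u @ [x, z, y] @ v" "w' = u @ [z, x, y] @ v"
    then show ?thesis using greene_t1[OF _ o] assms(2,3) by simp
  next
    assume "w = u @ [z, x, y] @ v" "w' = u @ [x, z, y] @ v"
    then show ?thesis using greene_r1[OF o] assms(3) by simp
  qed
qed

lemma gI_kmove: "kmove lt w w' \<Longrightarrow> distinct w \<Longrightarrow> gI lt k w = gI lt k w'"
proof -
  assume a: "kmove lt w w'" "distinct w"
  have d': "distinct w'" using kmove_mset[OF a(1)] a(2) by (metis mset_eq_imp_distinct_iff)
  have "gI lt k w \<le> gI lt k w'" by (rule gI_le, rule kmove_cov[OF a])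
  moreover have "gI lt k w' \<le> gI lt k w" by (rule gI_le, rule kmove_cov[OF kmove_sym[OF a(1)] d'])
  ultimately show ?thesis by simp
qed

lemma gI_knuth: "knuth lt w w' \<Longrightarrow> distinct w \<Longrightarrow> gI lt k w = gI lt k w'"
proof (induction rule: rtranclp_induct)
  case base then show ?case by simp
next
  case (step y z)
  have "distinct y" using knuth_mset[OF step.hyps(1)] step.prems by (metis mset_eq_imp_distinct_iff)
  then show ?case using gI_kmove[OF step.hyps(2)] step by simp
qed

end

lemma concat_split: "i < length P \<Longrightarrow> concat P = concat (take i P) @ P!i @ concat (drop (Suc i) P)"
proof -
  assume i: "i < length P"
  have "concat P = concat (take i P @ P!i # drop (Suc i) P)" using id_take_nth_drop[OF i] by (rule arg_cong)
  then show ?thesis by simp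
qed

lemma rd_split: "i < length P \<Longrightarrow> rd P = concat (rev (drop (Suc i) P)) @ P!i @ concat (rev (take i P))"
proof -
  assume i: "i < length P"
  have "rev P = rev (take i P @ P!i # drop (Suc i) P)" using id_take_nth_drop[OF i] by (rule arg_cong)
  then show ?thesis unfolding rd_def by simp
qed

lemma rd_split2: "rd P = concat (rev (drop i P)) @ concat (rev (take i P))"
proof -
  have "rev P = rev (take i P @ drop i P)" by simp
  then show ?thesis unfolding rd_def by (simp only: rev_append concat_append)
qed

lemma set_concat_take: "i < i' \<Longrightarrow> i' \<le> length P \<Longrightarrow> set (P!i) \<subseteq> set (concat (take i' P))"
proof -
  assume a: "i < i'" "i' \<le> length P"
  then have "take i' P ! i = P!i" "i < length (take i' P)" by auto
  then have "P!i \<in> set (take i' P)" by (metis nth_mem)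
  then show ?thesis by auto
qed

lemma set_concat_drop: "i' \<le> i \<Longrightarrow> i < length P \<Longrightarrow> set (P!i) \<subseteq> set (concat (drop i' P))"
proof -
  assume a: "i' \<le> i" "i < length P"
  then have "drop i' P ! (i - i') = P!i" "i - i' < length (drop i' P)" by auto
  then have "P!i \<in> set (drop i' P)" by (metis nth_mem)
  then show ?thesis by auto
qed

lemma rows_disj:
  assumes "distinct (concat P)" "i < i'" "i' < length P"
  shows "set (P!i) \<inter> set (P!i') = {}"
proof -
  have "distinct (concat (take i' P) @ P!i' @ concat (drop (Suc i') P))" using assms(1) concat_split[OF assms(3)] by simp
  then have "set (concat (take i' P)) \<inter> set (P!i') = {}" by (simp only: distinct_append) auto
  moreover have "set (P!i) \<subseteq> set (concat (take i' P))" using set_concat_take[of i i' P] assms(2,3) by simp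
  ultimately show ?thesis by blast
qed

lemma row_distinct: "distinct (concat P) \<Longrightarrow> i < length P \<Longrightarrow> distinct (P!i)"
proof -
  assume a: "distinct (concat P)" "i < length P"
  then have "distinct (concat (take i P) @ P!i @ concat (drop (Suc i) P))" using concat_split by metis
  then show ?thesis by (simp only: distinct_append)
qed

lemma before_asym:
  assumes "distinct u" "u = ys @ zs" "u = ys' @ zs'" "a \<in> set ys" "b \<in> set zs" "b \<in> set ys'" "a \<in> set zs'"
  shows False
proof -
  have "ys @ zs = ys' @ zs'" using assms(2,3) by simp
  then obtain us where "(ys = ys' @ us \<and> us @ zs = zs') \<or> (ys @ us = ys' \<and> zs = us @ zs')"
    unfolding append_eq_append_conv2 by blast
  then show False
  proof
    assume "ys = ys' @ us \<and> us @ zs = zs'"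
    then have "b \<in> set ys" using assms(6) by auto
    moreover have "distinct (ys @ zs)" using assms(1,2) by simp
    ultimately show False using assms(5) by auto
  next
    assume "ys @ us = ys' \<and> zs = us @ zs'"
    then have "a \<in> set ys'" using assms(4) by auto
    moreover have "distinct (ys' @ zs')" using assms(1,3) by simp
    ultimately show False using assms(7) by auto
  qed
qed

lemma chn_before: "chn lt u S \<Longrightarrow> u = ys @ zs \<Longrightarrow> b \<in> set ys \<Longrightarrow> a \<in> set zs \<Longrightarrow> b \<in> S \<Longrightarrow> a \<in> S \<Longrightarrow> lt b a"
  unfolding chn_def by (auto simp: sorted_wrt_append)

lemma chn_intro:
  assumes "\<And>ys zs a b. u = ys @ zs \<Longrightarrow> a \<in> set ys \<Longrightarrow> b \<in> set zs \<Longrightarrow> a \<in> S \<Longrightarrow> b \<in> S \<Longrightarrow> lt a b"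
  shows "chn lt u S"
  using assms
proof (induction u)
  case Nil then show ?case by (simp add: chn_def)
next
  case (Cons c u)
  have "chn lt u S"
    by (rule Cons.IH) (rule Cons.prems[of "c # _"], auto)
  moreover have "\<forall>b\<in>set u. c \<in> S \<longrightarrow> b \<in> S \<longrightarrow> lt c b"
    using Cons.prems[of "[c]" u c] by auto
  ultimately show ?case unfolding chn_def by auto
qed

context sto
begin

lemma tabl_colok: "tabl P \<Longrightarrow> Suc i < length P \<Longrightarrow> colok (P!i) (P!Suc i)"
proof (induction P arbitrary: i)
  case Nil then show ?case by simp
next
  case (Cons R T)
  show ?case
  proof (cases i)
    case 0
    then obtain R2 T' where "T = R2 # T'" using Cons.prems by (cases T) auto
    then show ?thesis using Cons.prems 0 by simp
  next
    case (Suc i')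
    then show ?thesis using Cons.IH[of i'] Cons.prems by simp
  qed
qed

lemma tabl_row: "tabl P \<Longrightarrow> i < length P \<Longrightarrow> P!i \<noteq> [] \<and> sorted_wrt lt (P!i)"
proof (induction P arbitrary: i)
  case Nil then show ?case by simp
next
  case (Cons R T) then show ?case by (cases i) auto
qed

lemma col_lt_aux:
  assumes "tabl P" "i + Suc d < length P" "j < length (P!(i + Suc d))"
  shows "j < length (P!i) \<and> lt (P!i!j) (P!(i + Suc d)!j)"
  using assms(2,3)
proof (induction d)
  case 0
  have "colok (P!i) (P!Suc i)" using tabl_colok[OF assms(1)] 0 by simp
  then show ?case using 0 by (auto simp: colok_def)
next
  case (Suc d)
  have c: "colok (P!(i + Suc d)) (P!Suc (i + Suc d))" using tabl_colok[OF assms(1)] Suc.prems by simp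
  then have h: "j < length (P!(i + Suc d))" "lt (P!(i + Suc d)!j) (P!Suc (i + Suc d)!j)" using Suc.prems by (auto simp: colok_def)
  then have "j < length (P!i) \<and> lt (P!i!j) (P!(i + Suc d)!j)" using Suc.IH Suc.prems by simp
  then show ?case using h trn by auto
qed

lemma col_lt:
  assumes "tabl P" "i < i'" "i' < length P" "j < length (P!i')"
  shows "j < length (P!i) \<and> lt (P!i!j) (P!i'!j)"
proof -
  have "i' = i + Suc (i' - i - 1)" using assms(2) by simp
  then show ?thesis using col_lt_aux[OF assms(1), of i "i' - i - 1" j] assms by metis
qed

end

lemma rd_before_rows:
  assumes "i < i'" "i' < length P" "b \<in> set (P!i')" "a \<in> set (P!i)"
  shows "\<exists>ys zs. rd P = ys @ zs \<and> b \<in> set ys \<and> a \<in> set zs"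
proof -
  have "b \<in> set (concat (rev (drop i' P)))" using set_concat_drop[of i' i' P] assms by auto
  moreover have "a \<in> set (concat (rev (take i' P)))" using set_concat_take[of i i' P] assms by auto
  ultimately show ?thesis using rd_split2[of P i'] by (intro exI[of _ "concat (rev (drop i' P))"] exI[of _ "concat (rev (take i' P))"]) simp
qed

lemma rd_before_row:
  assumes "i < length P" "j1 < j2" "j2 < length (P!i)"
  shows "\<exists>ys zs. rd P = ys @ zs \<and> P!i!j1 \<in> set ys \<and> P!i!j2 \<in> set zs"
proof -
  define X where "X = concat (rev (drop (Suc i) P))"
  define Y where "Y = concat (rev (take i P))"
  have "rd P = X @ P!i @ Y" using rd_split[OF assms(1)] unfolding X_def Y_def .
  also have "\<dots> = (X @ take j2 (P!i)) @ (drop j2 (P!i) @ Y)" by simp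
  finally have e: "rd P = (X @ take j2 (P!i)) @ (drop j2 (P!i) @ Y)" .
  have "take j2 (P!i) ! j1 = P!i!j1" "j1 < length (take j2 (P!i))" using assms by auto
  then have "P!i!j1 \<in> set (take j2 (P!i))" by (metis nth_mem)
  moreover have "drop j2 (P!i) ! 0 = P!i!j2" "0 < length (drop j2 (P!i))" using assms by auto
  then have "P!i!j2 \<in> set (drop j2 (P!i))" by (metis nth_mem)
  ultimately show ?thesis using e by (intro exI[of _ "X @ take j2 (P!i)"] exI[of _ "drop j2 (P!i) @ Y"]) simp
qed

lemma rd_mset: "mset (rd P) = mset (concat P)"
  unfolding rd_def by (induction P) auto

lemma rd_set: "set (rd P) = set (concat P)"
  by (metis rd_mset set_mset_mset)

lemma nth_inj2:
  assumes "distinct (concat P)" "i < length P" "i' < length P" "j < length (P!i)" "j' < length (P!i')"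
    "P!i!j = P!i'!j'"
  shows "i = i' \<and> j = j'"
proof -
  have ii: "i = i'"
  proof (rule ccontr)
    assume "i \<noteq> i'"
    then have "set (P!i) \<inter> set (P!i') = {}"
      using rows_disj[OF assms(1), of i i'] rows_disj[OF assms(1), of i' i] assms(2,3) by (cases "i < i'") auto
    then show False using assms(4,5,6) by (metis disjoint_iff nth_mem)
  qed
  moreover have "distinct (P!i)" using row_distinct[OF assms(1,2)] .
  ultimately show ?thesis using assms(4,5,6) by (simp add: nth_eq_iff_index_eq)
qed

lemma down_closed:
  assumes "finite C" "\<And>i i'. i < i' \<Longrightarrow> i' \<in> C \<Longrightarrow> i \<in> C"
  shows "C = {..<card C}"
proof (cases "C = {}")
  case True then show ?thesis by simp
next
  case False
  define M where "M = Max C"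
  have "M \<in> C" unfolding M_def using assms(1) False by simp
  have "C = {..M}"
  proof
    show "C \<subseteq> {..M}" unfolding M_def using assms(1) by auto
    show "{..M} \<subseteq> C"
    proof
      fix i assume "i \<in> {..M}"
      then show "i \<in> C" using assms(2)[of i M] \<open>M \<in> C\<close> by (cases "i = M") auto
    qed
  qed
  then show ?thesis by auto
qed

lemma sum_card_swap:
  assumes "finite I" "finite J"
  shows "(\<Sum>j\<in>J. card {i\<in>I. Q i j}) = (\<Sum>i\<in>I. card {j\<in>J. Q i j})"
proof -
  have a: "card {i\<in>I. Q i j} = (\<Sum>i\<in>I. if Q i j then 1 else 0)" for j
    using assms(1) by (simp add: sum.If_cases Collect_conj_eq Int_commute)
  have b: "card {j\<in>J. Q i j} = (\<Sum>j\<in>J. if Q i j then 1 else 0)" for i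
    using assms(2) by (simp add: sum.If_cases Collect_conj_eq Int_commute)
  show ?thesis unfolding a b by (rule sum.swap)
qed

context sto
begin

lemma distinct_rd: "distinct (concat P) \<Longrightarrow> distinct (rd P)"
  by (metis rd_mset mset_eq_imp_distinct_iff)

lemma chain_col:
  assumes "tabl P" "chn lt (rd P) S" "i < i'" "i' < length P" "j < length (P!i')"
    "P!i!j \<in> S" "P!i'!j \<in> S"
  shows False
proof -
  have c: "j < length (P!i)" "lt (P!i!j) (P!i'!j)" using col_lt[OF assms(1,3,4,5)] by auto
  obtain ys zs where "rd P = ys @ zs" "P!i'!j \<in> set ys" "P!i!j \<in> set zs"
    using rd_before_rows[OF assms(3,4), of "P!i'!j" "P!i!j"] c assms(5) by (auto dest: nth_mem)
  then have "lt (P!i'!j) (P!i!j)" using chn_before[OF assms(2)] assms(6,7) by blast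
  then show False using c asym by blast
qed

lemma row_chn:
  assumes "tabl P" "distinct (concat P)" "i < length P"
  shows "chn lt (rd P) (set (P!i))"
proof (rule chn_intro)
  fix ys zs a b assume h: "rd P = ys @ zs" "a \<in> set ys" "b \<in> set zs" "a \<in> set (P!i)" "b \<in> set (P!i)"
  have d: "distinct (rd P)" using distinct_rd[OF assms(2)] .
  obtain j1 where j1: "j1 < length (P!i)" "a = P!i!j1" using h(4) by (auto simp: in_set_conv_nth)
  obtain j2 where j2: "j2 < length (P!i)" "b = P!i!j2" using h(5) by (auto simp: in_set_conv_nth)
  have s: "sorted_wrt lt (P!i)" using tabl_row[OF assms(1,3)] by simp
  show "lt a b"
  proof (cases j1 j2 rule: linorder_cases)
    case less then show ?thesis using sorted_nth[OF s less j2(1)] j1 j2 by simp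
  next
    case equal
    then have "a = b" using j1 j2 by simp
    then show ?thesis using before_asym[OF d h(1) h(1) h(2) h(3)] h by simp
  next
    case greater
    obtain ys' zs' where "rd P = ys' @ zs'" "P!i!j2 \<in> set ys'" "P!i!j1 \<in> set zs'"
      using rd_before_row[OF assms(3) greater j1(1)] by blast
    then show ?thesis using before_asym[OF d h(1), of ys' zs' a b] h j1 j2 by simp
  qed
qed

lemma col_chn_flip:
  assumes "tabl P" "distinct (concat P)"
  shows "chn (\<lambda>a b. lt b a) (rd P) {P!i!j | i. i < length P \<and> j < length (P!i)}"
proof (rule chn_intro)
  fix ys zs a b assume h: "rd P = ys @ zs" "a \<in> set ys" "b \<in> set zs"
    "a \<in> {P!i!j | i. i < length P \<and> j < length (P!i)}" "b \<in> {P!i!j | i. i < length P \<and> j < length (P!i)}"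
  have d: "distinct (rd P)" using distinct_rd[OF assms(2)] .
  obtain i1 where i1: "i1 < length P" "j < length (P!i1)" "a = P!i1!j" using h(4) by auto
  obtain i2 where i2: "i2 < length P" "j < length (P!i2)" "b = P!i2!j" using h(5) by auto
  show "lt b a"
  proof (cases i1 i2 rule: linorder_cases)
    case greater then show ?thesis using col_lt[OF assms(1) greater i1(1) i1(2)] i1 i2 by simp
  next
    case equal
    then have "a = b" using i1 i2 by simp
    then show ?thesis using before_asym[OF d h(1) h(1) h(2) h(3)] h by simp
  next
    case less
    obtain ys' zs' where "rd P = ys' @ zs'" "b \<in> set ys'" "a \<in> set zs'"
      using rd_before_rows[OF less i2(1), of b a] i1 i2 by (auto dest: nth_mem)
    then show ?thesis using before_asym[OF d h(1), of ys' zs' a b] h by simp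
  qed
qed

lemma chain_row_flip:
  assumes "tabl P" "chn (\<lambda>a b. lt b a) (rd P) S" "i < length P" "j1 < j2" "j2 < length (P!i)"
    "P!i!j1 \<in> S" "P!i!j2 \<in> S"
  shows False
proof -
  obtain ys zs where "rd P = ys @ zs" "P!i!j1 \<in> set ys" "P!i!j2 \<in> set zs"
    using rd_before_row[OF assms(3,4,5)] by blast
  then have "lt (P!i!j2) (P!i!j1)" using chn_before[OF assms(2)] assms(6,7) by blast
  moreover have "lt (P!i!j1) (P!i!j2)" using sorted_nth[of "P!i" j1 j2] tabl_row[OF assms(1,3)] assms(4,5) by simp
  ultimately show False using asym by blast
qed

end

lemma card_le_k:
  assumes "finite X" "X \<subseteq> (\<Union>l<k. A l)" "\<And>l a b. l < k \<Longrightarrow> a \<in> A l \<Longrightarrow> b \<in> A l \<Longrightarrow> a \<in> X \<Longrightarrow> b \<in> X \<Longrightarrow> a = b"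
  shows "card X \<le> k"
proof -
  have "X = (\<Union>l<k. A l \<inter> X)" using assms(2) by auto
  then have "card X \<le> (\<Sum>l<k. card (A l \<inter> X))" by (metis card_UN_le finite_lessThan)
  also have "\<dots> \<le> (\<Sum>l<k. 1)"
  proof (rule sum_mono)
    fix l assume "l \<in> {..<k}"
    then have "\<forall>a\<in>A l \<inter> X. \<forall>b\<in>A l \<inter> X. a = b" using assms(3) by blast
    then show "card (A l \<inter> X) \<le> 1" using card_le_Suc0_iff_eq[of "A l \<inter> X"] assms(1) by simp
  qed
  finally show ?thesis by simp
qed

lemma set_concat_nth: "t \<in> set (concat P) \<Longrightarrow> \<exists>i j. i < length P \<and> j < length (P!i) \<and> t = P!i!j"
proof -
  assume "t \<in> set (concat P)"
  then obtain R where "R \<in> set P" "t \<in> set R" by auto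
  then obtain i where "i < length P" "R = P!i" by (auto simp: in_set_conv_nth)
  moreover obtain j where "j < length R" "t = R!j" using \<open>t \<in> set R\<close> by (auto simp: in_set_conv_nth)
  ultimately show ?thesis by blast
qed

context sto
begin

lemma len_le_0: "tabl P \<Longrightarrow> i < length P \<Longrightarrow> length (P!i) \<le> length (P!0)"
proof -
  assume a: "tabl P" "i < length P"
  show ?thesis
  proof (cases "i = 0")
    case False
    have "\<And>j. j < length (P!i) \<Longrightarrow> j < length (P!0)" using col_lt[OF a(1), of 0 i] a False by auto
    then show ?thesis by (meson leI less_irrefl)
  qed simp
qed

lemma gI_rows:
  assumes tb: "tabl P" and dc: "distinct (concat P)"
  shows "gI lt k (rd P) = (\<Sum>i<min k (length P). length (P!i))"
proof (rule antisym)
  let ?n = "length P"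
  show "gI lt k (rd P) \<le> (\<Sum>i<min k ?n. length (P!i))"
  proof (cases "P = []")
    case True
    obtain T where "cov lt k (rd P) T" "card T = gI lt k (rd P)" using gI_attained by blast
    then show ?thesis using True by (auto simp: cov_def rd_def)
  next
    case False
    define m where "m = length (P!0)"
    obtain T where cT: "cov lt k (rd P) T" "card T = gI lt k (rd P)" using gI_attained by blast
    then obtain f where f: "\<forall>l<k. chn lt (rd P) (f l)" "T = set (rd P) \<inter> (\<Union>l<k. f l)" unfolding cov_def by blast
    define C where "C j = {i. i < ?n \<and> j < length (P!i)}" for j
    define Tj where "Tj j = {i \<in> C j. P!i!j \<in> T}" for j
    have finC: "finite (C j)" for j by (rule finite_subset[of _ "{..<?n}"]) (auto simp: C_def)
    have T_un: "T \<subseteq> (\<Union>j<m. (\<lambda>i. P!i!j) ` Tj j)"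
    proof
      fix t assume "t \<in> T"
      then have "t \<in> set (rd P)" using f(2) by blast
      then have "t \<in> set (concat P)" using rd_set[of P] by simp
      from set_concat_nth[OF this] obtain i j where ij: "i < ?n" "j < length (P!i)" "t = P!i!j" by blast
      have "j < m" using len_le_0[OF tb ij(1)] ij(2) unfolding m_def by simp
      then show "t \<in> (\<Union>j<m. (\<lambda>i. P!i!j) ` Tj j)" using ij \<open>t \<in> T\<close> unfolding Tj_def C_def by auto
    qed
    have "card T \<le> card (\<Union>j<m. (\<lambda>i. P!i!j) ` Tj j)" using T_un by (intro card_mono) (auto simp: Tj_def finC)
    also have "\<dots> \<le> (\<Sum>j<m. card ((\<lambda>i. P!i!j) ` Tj j))" by (rule card_UN_le) simp
    also have "\<dots> \<le> (\<Sum>j<m. card (Tj j))" by (rule sum_mono, rule card_image_le) (auto simp: Tj_def finC)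
    also have "\<dots> \<le> (\<Sum>j<m. card {i\<in>{..<min k ?n}. j < length (P!i)})"
    proof (rule sum_mono)
      fix j assume "j \<in> {..<m}"
      have finT: "finite (Tj j)" unfolding Tj_def using finC by simp
      have k: "card (Tj j) \<le> k"
      proof (rule card_le_k[OF finT, where k=k and A="\<lambda>l. {i. P!i!j \<in> f l}"])
        show "Tj j \<subseteq> (\<Union>l<k. {i. P!i!j \<in> f l})" unfolding Tj_def using f(2) by auto
      next
        fix l a b assume h: "l < k" "a \<in> {i. P!i!j \<in> f l}" "b \<in> {i. P!i!j \<in> f l}" "a \<in> Tj j" "b \<in> Tj j"
        show "a = b"
        proof (rule ccontr)
          assume "a \<noteq> b"
          then show False
          proof (cases "a < b")
            case True
            show False using chain_col[OF tb f(1)[rule_format, OF h(1)] True] h unfolding Tj_def C_def by auto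
          next
            case False
            then have "b < a" using \<open>a \<noteq> b\<close> by simp
            show False using chain_col[OF tb f(1)[rule_format, OF h(1)] \<open>b < a\<close>] h unfolding Tj_def C_def by auto
          qed
        qed
      qed
      have dcl: "C j = {..<card (C j)}"
      proof (rule down_closed[OF finC])
        fix i i' assume "i < i'" "i' \<in> C j"
        then show "i \<in> C j" using col_lt[OF tb, of i i' j] unfolding C_def by auto
      qed
      have "Tj j \<subseteq> C j" unfolding Tj_def by auto
      then have c: "card (Tj j) \<le> card (C j)" using finC by (simp add: card_mono)
      define cc where "cc = card (C j)"
      have cc: "C j = {..<cc}" unfolding cc_def by (rule dcl)
      have "{i\<in>{..<min k ?n}. j < length (P!i)} = C j \<inter> {..<k}" unfolding C_def by auto
      also have "\<dots> = {..<min cc k}" unfolding cc by (rule set_eqI) simp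
      finally have "card {i\<in>{..<min k ?n}. j < length (P!i)} = min cc k" by simp
      moreover have "card (C j) = cc" unfolding cc_def by simp
      ultimately show "card (Tj j) \<le> card {i\<in>{..<min k ?n}. j < length (P!i)}" using c k by simp
    qed
    also have "\<dots> = (\<Sum>i<min k ?n. card {j\<in>{..<m}. j < length (P!i)})" by (rule sum_card_swap) simp_all
    also have "\<dots> = (\<Sum>i<min k ?n. length (P!i))"
    proof (rule sum.cong)
      fix i assume "i \<in> {..<min k ?n}"
      then have "length (P!i) \<le> m" using len_le_0[OF tb] unfolding m_def by simp
      then have "{j\<in>{..<m}. j < length (P!i)} = {..<length (P!i)}" by auto
      then show "card {j\<in>{..<m}. j < length (P!i)} = length (P!i)" by simp
    qed simp
    finally show ?thesis using cT(2) by simp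
  qed
next
  let ?n = "length P"
  define f where "f i = (if i < ?n then set (P!i) else {})" for i
  have fc: "\<forall>i<k. chn lt (rd P) (f i)"
  proof (intro allI impI)
    fix i assume "i < k"
    show "chn lt (rd P) (f i)"
    proof (cases "i < ?n")
      case True then show ?thesis using row_chn[OF tb dc True] unfolding f_def by simp
    next
      case False then show ?thesis unfolding f_def chn_def by simp
    qed
  qed
  have se: "set (rd P) \<inter> (\<Union>i<k. f i) = (\<Union>i<min k ?n. set (P!i))"
  proof
    show "set (rd P) \<inter> (\<Union>i<k. f i) \<subseteq> (\<Union>i<min k ?n. set (P!i))"
    proof
      fix t assume "t \<in> set (rd P) \<inter> (\<Union>i<k. f i)"
      then obtain i where "i < k" "t \<in> f i" by blast
      then have "i < ?n" "t \<in> set (P!i)" unfolding f_def by (auto split: if_splits)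
      then show "t \<in> (\<Union>i<min k ?n. set (P!i))" using \<open>i < k\<close> by auto
    qed
  next
    show "(\<Union>i<min k ?n. set (P!i)) \<subseteq> set (rd P) \<inter> (\<Union>i<k. f i)"
    proof
      fix t assume "t \<in> (\<Union>i<min k ?n. set (P!i))"
      then obtain i where i: "i < k" "i < ?n" "t \<in> set (P!i)" by auto
      then have "t \<in> set (concat P)" by (metis UN_I concat_eq_concat_iff set_concat nth_mem)
      then have "t \<in> set (rd P)" using rd_set[of P] by simp
      moreover have "t \<in> f i" using i unfolding f_def by simp
      ultimately show "t \<in> set (rd P) \<inter> (\<Union>i<k. f i)" using i by blast
    qed
  qed
  have cv: "cov lt k (rd P) (\<Union>i<min k ?n. set (P!i))"
    unfolding cov_def by (rule exI[of _ f]) (use fc se in simp)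
  have "card (\<Union>i<min k ?n. set (P!i)) = (\<Sum>i<min k ?n. card (set (P!i)))"
  proof (rule card_UN_disjoint)
    show "\<forall>i\<in>{..<min k ?n}. \<forall>j\<in>{..<min k ?n}. i \<noteq> j \<longrightarrow> set (P!i) \<inter> set (P!j) = {}"
    proof (intro ballI impI)
      fix i j assume h: "i \<in> {..<min k ?n}" "j \<in> {..<min k ?n}" "i \<noteq> j"
      show "set (P!i) \<inter> set (P!j) = {}"
      proof (cases "i < j")
        case True then show ?thesis using rows_disj[OF dc True] h by simp
      next
        case False then have "j < i" using h(3) by simp
        then show ?thesis using rows_disj[OF dc \<open>j < i\<close>] h by (simp add: Int_commute)
      qed
    qed
  qed simp_all
  also have "\<dots> = (\<Sum>i<min k ?n. length (P!i))"
    by (rule sum.cong) (auto simp: distinct_card row_distinct[OF dc])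
  finally show "(\<Sum>i<min k ?n. length (P!i)) \<le> gI lt k (rd P)" using cov_card_le[OF cv] by simp
qed

lemma gI_cols:
  assumes tb: "tabl P" and dc: "distinct (concat P)"
  shows "gI (\<lambda>a b. lt b a) k (rd P) = (\<Sum>i<length P. min k (length (P!i)))"
proof (rule antisym)
  let ?n = "length P"
  let ?gt = "\<lambda>a b. lt b a"
  show "gI ?gt k (rd P) \<le> (\<Sum>i<?n. min k (length (P!i)))"
  proof -
    obtain T where cT: "cov ?gt k (rd P) T" "card T = gI ?gt k (rd P)" using gI_attained by blast
    then obtain f where f: "\<forall>l<k. chn ?gt (rd P) (f l)" "T = set (rd P) \<inter> (\<Union>l<k. f l)" unfolding cov_def by blast
    have "T \<subseteq> (\<Union>i<?n. T \<inter> set (P!i))"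
    proof
      fix t assume "t \<in> T"
      then have "t \<in> set (rd P)" using f(2) by blast
      then have "t \<in> set (concat P)" using rd_set[of P] by simp
      from set_concat_nth[OF this] obtain i j where ij: "i < ?n" "j < length (P!i)" "t = P!i!j" by blast
      then have "t \<in> T \<inter> set (P!i)" using \<open>t \<in> T\<close> by simp
      then show "t \<in> (\<Union>i<?n. T \<inter> set (P!i))" using ij(1) by blast
    qed
    then have "card T \<le> card (\<Union>i<?n. T \<inter> set (P!i))" by (intro card_mono) auto
    also have "\<dots> \<le> (\<Sum>i<?n. card (T \<inter> set (P!i)))" by (rule card_UN_le) simp
    also have "\<dots> \<le> (\<Sum>i<?n. min k (length (P!i)))"
    proof (rule sum_mono)
      fix i assume i: "i \<in> {..<?n}"
      have "card (T \<inter> set (P!i)) \<le> length (P!i)"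
        by (metis card_length card_mono finite_set inf_le2 order_trans)
      moreover have "card (T \<inter> set (P!i)) \<le> k"
      proof (rule card_le_k[where k=k and A=f])
        show "finite (T \<inter> set (P!i))" by simp
        show "T \<inter> set (P!i) \<subseteq> (\<Union>l<k. f l)" using f(2) by auto
      next
        fix l a b assume h: "l < k" "a \<in> f l" "b \<in> f l" "a \<in> T \<inter> set (P!i)" "b \<in> T \<inter> set (P!i)"
        obtain j1 where j1: "j1 < length (P!i)" "a = P!i!j1" using h(4) by (auto simp: in_set_conv_nth)
        obtain j2 where j2: "j2 < length (P!i)" "b = P!i!j2" using h(5) by (auto simp: in_set_conv_nth)
        show "a = b"
        proof (cases j1 j2 rule: linorder_cases)
          case less
          then show ?thesis using chain_row_flip[OF tb f(1)[rule_format, OF h(1)] _ less j2(1)] i h j1 j2 by auto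
        next
          case equal then show ?thesis using j1 j2 by simp
        next
          case greater
          then show ?thesis using chain_row_flip[OF tb f(1)[rule_format, OF h(1)] _ greater j1(1)] i h j1 j2 by auto
        qed
      qed
      ultimately show "card (T \<inter> set (P!i)) \<le> min k (length (P!i))" by simp
    qed
    finally show ?thesis using cT(2) by simp
  qed
next
  let ?n = "length P"
  let ?gt = "\<lambda>a b. lt b a"
  define C where "C j = {i. i < ?n \<and> j < length (P!i)}" for j
  define col where "col j = (\<lambda>i. P!i!j) ` C j" for j
  have finC: "finite (C j)" for j by (rule finite_subset[of _ "{..<?n}"]) (auto simp: C_def)
  have colE: "col j = {P!i!j | i. i < length P \<and> j < length (P!i)}" for j unfolding col_def C_def by auto
  have fc: "\<forall>j<k. chn ?gt (rd P) (col j)" using col_chn_flip[OF tb dc] colE by simp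
  have sub: "col j \<subseteq> set (rd P)" for j
  proof
    fix t assume "t \<in> col j"
    then obtain i where "i < ?n" "j < length (P!i)" "t = P!i!j" unfolding col_def C_def by auto
    then have "t \<in> set (concat P)" by (metis UN_I nth_mem set_concat)
    then show "t \<in> set (rd P)" using rd_set[of P] by simp
  qed
  have se: "set (rd P) \<inter> (\<Union>j<k. col j) = (\<Union>j<k. col j)" using sub by blast
  have cv: "cov ?gt k (rd P) (\<Union>j<k. col j)"
    unfolding cov_def by (rule exI[of _ col]) (use fc se in simp)
  have ccol: "card (col j) = card (C j)" for j
    unfolding col_def
  proof (rule card_image, rule inj_onI)
    fix i i' assume "i \<in> C j" "i' \<in> C j" "P!i!j = P!i'!j"
    then show "i = i'" using nth_inj2[OF dc, of i i' j j] unfolding C_def by auto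
  qed
  have "card (\<Union>j<k. col j) = (\<Sum>j<k. card (col j))"
  proof (rule card_UN_disjoint)
    show "\<forall>j\<in>{..<k}. finite (col j)" unfolding col_def using finC by simp
    show "\<forall>j\<in>{..<k}. \<forall>j'\<in>{..<k}. j \<noteq> j' \<longrightarrow> col j \<inter> col j' = {}"
    proof (intro ballI impI)
      fix j j' :: nat assume "j \<noteq> j'"
      show "col j \<inter> col j' = {}"
      proof (rule ccontr)
        assume "col j \<inter> col j' \<noteq> {}"
        then obtain i i' where "i \<in> C j" "i' \<in> C j'" "P!i!j = P!i'!j'" unfolding col_def by blast
        then show False using nth_inj2[OF dc, of i i' j j'] \<open>j \<noteq> j'\<close> unfolding C_def by auto
      qed
    qed
  qed simp
  also have "\<dots> = (\<Sum>j<k. card {i\<in>{..<?n}. j < length (P!i)})"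
    by (rule sum.cong) (auto simp: ccol C_def)
  also have "\<dots> = (\<Sum>i<?n. card {j\<in>{..<k}. j < length (P!i)})" by (rule sum_card_swap) simp_all
  also have "\<dots> = (\<Sum>i<?n. min k (length (P!i)))"
  proof (rule sum.cong)
    fix i
    have "{j\<in>{..<k}. j < length (P!i)} = {..<min k (length (P!i))}" by (rule set_eqI) simp
    then show "card {j\<in>{..<k}. j < length (P!i)} = min k (length (P!i))" by simp
  qed simp
  finally show "(\<Sum>i<?n. min k (length (P!i))) \<le> gI ?gt k (rd P)" using cov_card_le[OF cv] by simp
qed

end

section \<open>Standardization\<close>

definition sl :: "letter rel \<Rightarrow> (letter \<Rightarrow> bool) \<Rightarrow> letter \<times> nat \<Rightarrow> letter \<times> nat \<Rightarrow> bool" where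
  "sl r st a b = (if fst a = fst b then (if st (fst a) then snd a < snd b else snd b < snd a) else (fst a, fst b) \<in> r)"

definition bp :: "letter rel \<Rightarrow> (letter \<Rightarrow> bool) \<Rightarrow> letter \<times> nat \<Rightarrow> letter \<times> nat \<Rightarrow> bool" where
  "bp r st a b = bumps r st (fst a) (fst b)"

locale stdz =
  fixes r :: "letter rel" and st :: "letter \<Rightarrow> bool"
  assumes lin: "linear_order r"
begin

lemma r_refl: "(x, x) \<in> r"
  using lin unfolding linear_order_on_def partial_order_on_def preorder_on_def refl_on_def by blast

lemma r_trans: "(x, y) \<in> r \<Longrightarrow> (y, z) \<in> r \<Longrightarrow> (x, z) \<in> r"
  using lin unfolding linear_order_on_def partial_order_on_def preorder_on_def trans_def by blast

lemma r_antisym: "(x, y) \<in> r \<Longrightarrow> (y, x) \<in> r \<Longrightarrow> x = y"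
  using lin unfolding linear_order_on_def partial_order_on_def antisym_def by blast

lemma r_total: "x \<noteq> y \<Longrightarrow> (x, y) \<in> r \<or> (y, x) \<in> r"
  using lin unfolding linear_order_on_def total_on_def by blast

end

sublocale stdz \<subseteq> sto "sl r st"
proof
  fix a :: "letter \<times> nat" show "\<not> sl r st a a" unfolding sl_def by simp
next
  fix a b c :: "letter \<times> nat" assume "sl r st a b" "sl r st b c"
  then show "sl r st a c" unfolding sl_def using r_trans r_antisym
    by (auto split: if_splits)
next
  fix a b :: "letter \<times> nat" assume "a \<noteq> b"
  then show "sl r st a b \<or> sl r st b a" unfolding sl_def using r_total
    by (cases a, cases b) (auto split: if_splits)
qed

context stdz
begin

lemma interval: "sl r st g z \<Longrightarrow> sl r st z a \<Longrightarrow> fst g = fst a \<Longrightarrow> fst z = fst g"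
  unfolding sl_def using r_antisym by (auto split: if_splits)

fun INV :: "(letter \<times> nat) list list \<Rightarrow> bool" where
  "INV [] = True"
| "INV (R # T) = (sorted_wrt (sl r st) R \<and>
     (\<forall>a\<in>set R. \<forall>b\<in>set R. fst a = fst b \<and> \<not> st (fst a) \<longrightarrow> a = b) \<and> INV T \<and>
     (\<forall>e\<in>set R. \<forall>f\<in>set (concat T). fst e = fst f \<longrightarrow> snd f < snd e))"

lemma bp_sl:
  assumes "fst y = fst g \<Longrightarrow> snd y < snd g"
  shows "bp r st g y = sl r st g y"
  using assms r_refl unfolding bp_def sl_def bumps_def by auto

lemma tins_agree:
  assumes "INV T" "\<forall>f\<in>set (concat T). fst f = fst g \<longrightarrow> snd f < snd g"
  shows "tins (bp r st) g T = tins (sl r st) g T \<and> INV (tins (sl r st) g T)"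
  using assms
proof (induction T arbitrary: g)
  case Nil then show ?case by simp
next
  case (Cons R T0)
  let ?lt = "sl r st"
  have I: "sorted_wrt ?lt R" "\<forall>a\<in>set R. \<forall>b\<in>set R. fst a = fst b \<and> \<not> st (fst a) \<longrightarrow> a = b" "INV T0"
    "\<forall>e\<in>set R. \<forall>f\<in>set (concat T0). fst e = fst f \<longrightarrow> snd f < snd e" using Cons.prems(1) by auto
  have pre: "\<forall>f\<in>set R \<union> set (concat T0). fst f = fst g \<longrightarrow> snd f < snd g" using Cons.prems(2) by auto
  have ag: "rins (bp r st) g R = rins ?lt g R"
    by (rule rins_cong, rule bp_sl) (use pre in auto)
  have gR: "g \<notin> set R" using pre by auto
  obtain R' c where rc: "rins ?lt g R = (R', c)" by fastforce
  show ?case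
  proof (cases c)
    case None
    then have R': "R' = R @ [g]" "\<And>i. i<length R \<Longrightarrow> ?lt (R!i) g" using rins_None_lt[of g R R'] rc gR by auto
    have s: "sorted_wrt ?lt R'" using sorted_snoc_lt[OF I(1)] R' by simp
    have u: "\<forall>a\<in>set R'. \<forall>b\<in>set R'. fst a = fst b \<and> \<not> st (fst a) \<longrightarrow> a = b"
    proof -
      have "\<And>a. a \<in> set R \<Longrightarrow> fst a = fst g \<Longrightarrow> \<not> st (fst a) \<Longrightarrow> False"
      proof -
        fix a assume a: "a \<in> set R" "fst a = fst g" "\<not> st (fst a)"
        then obtain i where "i < length R" "a = R!i" by (auto simp: in_set_conv_nth)
        then have "?lt a g" using R' by simp
        then have "snd g < snd a" using a unfolding sl_def by simp
        then show False using pre a by fastforce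
      qed
      then show ?thesis using I(2) R' by (metis Un_iff empty_iff empty_set set_ConsD set_append)
    qed
    have x: "\<forall>e\<in>set R'. \<forall>f\<in>set (concat T0). fst e = fst f \<longrightarrow> snd f < snd e"
    proof (intro ballI impI)
      fix e f assume h: "e \<in> set R'" "f \<in> set (concat T0)" "fst e = fst f"
      then have "e = g \<or> e \<in> set R" using R' by auto
      then show "snd f < snd e"
      proof
        assume "e = g" then show ?thesis using pre h by auto
      next
        assume "e \<in> set R" then show ?thesis using I(4) h by auto
      qed
    qed
    show ?thesis using ag rc None s u x I(3) by simp
  next
    case (Some z)
    then obtain j where j: "j < length R" "R!j = z" "R' = R[j := g]" "?lt g z" "\<forall>i<j. ?lt (R!i) g"
      using rins_Some_lt[of g R R' z] rc gR by auto
    have zR: "z \<in> set R" using j by auto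
    have preZ: "\<forall>f\<in>set (concat T0). fst f = fst z \<longrightarrow> snd f < snd z" using I(4) zR by auto
    have IH: "tins (bp r st) z T0 = tins ?lt z T0 \<and> INV (tins ?lt z T0)" using Cons.IH[OF I(3) preZ] .
    have dR: "distinct R" using I(1) irr by (metis sorted_wrt_iff_nth_less distinct_conv_nth linorder_neqE_nat)
    have setR': "set R' \<subseteq> insert g (set R - {z})"
    proof
      fix a assume "a \<in> set R'"
      then obtain i where i: "i < length R" "a = R[j := g] ! i" using j(3) by (auto simp: in_set_conv_nth)
      show "a \<in> insert g (set R - {z})"
      proof (cases "i = j")
        case True then show ?thesis using i j by simp
      next
        case False
        then have "a = R!i" using i by simp
        moreover have "R!i \<noteq> z" using dR False i j by (metis nth_eq_iff_index_eq)
        ultimately show ?thesis using i by auto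
      qed
    qed
    have pos: "\<And>a. a \<in> set R \<Longrightarrow> a \<noteq> z \<Longrightarrow> ?lt a g \<or> ?lt z a"
    proof -
      fix a assume a: "a \<in> set R" "a \<noteq> z"
      then obtain i where i: "i < length R" "a = R!i" by (auto simp: in_set_conv_nth)
      have "i \<noteq> j" using a i j by auto
      then show "?lt a g \<or> ?lt z a"
      proof (cases "i < j")
        case True then show ?thesis using j i by simp
      next
        case False then have "j < i" using \<open>i \<noteq> j\<close> by simp
        then show ?thesis using sorted_nth[OF I(1) \<open>j < i\<close> i(1)] i j by simp
      qed
    qed
    have s: "sorted_wrt ?lt R'" using sorted_upd[OF I(1) j(1)] j by simp
    have u: "\<forall>a\<in>set R'. \<forall>b\<in>set R'. fst a = fst b \<and> \<not> st (fst a) \<longrightarrow> a = b"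
    proof -
      have ga: "\<And>a. a \<in> set R \<Longrightarrow> a \<noteq> z \<Longrightarrow> fst a = fst g \<Longrightarrow> \<not> st (fst a) \<Longrightarrow> False"
      proof -
        fix a assume a: "a \<in> set R" "a \<noteq> z" "fst a = fst g" "\<not> st (fst a)"
        have "snd a < snd g" using pre a by auto
        then have ga: "?lt g a" using a unfolding sl_def by simp
        show False
        proof (cases "?lt a g")
          case True then show False using ga asym by blast
        next
          case False
          then have za: "?lt z a" using pos a by blast
          then have "fst z = fst g" using interval[OF j(4) za] a by simp
          then have "z = a" using I(2) zR a by metis
          then show False using a by simp
        qed
      qed
      show ?thesis
      proof (intro ballI impI)
        fix a b assume ab: "a \<in> set R'" "b \<in> set R'" "fst a = fst b \<and> \<not> st (fst a)"
        then have "a \<in> insert g (set R - {z})" "b \<in> insert g (set R - {z})" using setR' by auto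
        then show "a = b" using ab ga I(2) by (metis DiffE insertE singletonI)
      qed
    qed
    have x: "\<forall>e\<in>set R'. \<forall>f\<in>set (concat (tins ?lt z T0)). fst e = fst f \<longrightarrow> snd f < snd e"
    proof (intro ballI impI)
      fix e f assume h: "e \<in> set R'" "f \<in> set (concat (tins ?lt z T0))" "fst e = fst f"
      have "set (concat (tins ?lt z T0)) = insert z (set (concat T0))"
        using tins_mset[of ?lt z T0] by (metis set_mset_add_mset_insert set_mset_mset)
      then have f: "f = z \<or> f \<in> set (concat T0)" using h(2) by auto
      have e: "e = g \<or> (e \<in> set R \<and> e \<noteq> z)" using h(1) setR' by auto
      show "snd f < snd e"
      proof (cases "e = g")
        case True then show ?thesis using f pre zR h(3) by auto
      next
        case False
        then have e2: "e \<in> set R" "e \<noteq> z" using e by auto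
        show ?thesis
        proof (cases "f = z")
          case False then show ?thesis using f I(4) e2 h(3) by auto
        next
          case True
          show ?thesis
          proof (cases "st (fst e)")
            case False
            then have "e = z" using I(2) e2 zR h(3) True by metis
            then show ?thesis using e2 by simp
          next
            case stE: True
            show ?thesis
            proof (cases "?lt e z")
              case True
              have "?lt e g"
              proof -
                have "?lt e g \<or> ?lt z e" using pos e2 by blast
                then show ?thesis using True asym by blast
              qed
              then have "fst g = fst e" using interval[OF \<open>?lt e g\<close> j(4)] h(3) \<open>f = z\<close> by simp
              then have "snd g < snd z" using j(4) stE h(3) \<open>f = z\<close> unfolding sl_def by simp
              moreover have "snd z < snd g" using pre zR \<open>fst g = fst e\<close> h(3) \<open>f = z\<close> by auto
              ultimately show ?thesis by simp
            next
              case False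
              then have "?lt z e" using tot e2 by blast
              then show ?thesis using stE h(3) \<open>f = z\<close> unfolding sl_def by simp
            qed
          qed
        qed
      qed
    qed
    show ?thesis using ag rc Some IH s u x by simp
  qed
qed

lemma rsk_agree:
  assumes "sorted_wrt (\<lambda>a b. snd a < snd b) tw"
  shows "rsk (bp r st) tw = rsk (sl r st) tw \<and> INV (rsk (sl r st) tw)"
  using assms
proof (induction tw rule: rev_induct)
  case Nil then show ?case by simp
next
  case (snoc g tw)
  have IH: "rsk (bp r st) tw = rsk (sl r st) tw" "INV (rsk (sl r st) tw)" using snoc by (auto simp: sorted_wrt_append)
  have "set (concat (rsk (sl r st) tw)) = set tw" by (metis rsk_mset set_mset_mset)
  then have pre: "\<forall>f\<in>set (concat (rsk (sl r st) tw)). fst f = fst g \<longrightarrow> snd f < snd g"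
    using snoc.prems by (auto simp: sorted_wrt_append)
  show ?case using tins_agree[OF IH(2) pre] IH(1) by (simp add: rsk_snoc)
qed

end

section \<open>Duality\<close>

context sto
begin

lemma sto_flip: "sto (\<lambda>a b. lt b a)"
  by unfold_locales (use irr trn tot in blast)+

lemma knuth_flip_eq: "knuth (\<lambda>a b. lt b a) = knuth lt"
proof -
  have "kmove (\<lambda>a b. lt b a) = kmove lt" by (intro ext) (rule kmove_flip)
  then show ?thesis by simp
qed

lemma duality:
  assumes dw: "distinct w"
  shows "(\<Sum>i<min k (length (rsk lt w)). length (rsk lt w ! i)) =
         (\<Sum>i<length (rsk (\<lambda>a b. lt b a) w). min k (length (rsk (\<lambda>a b. lt b a) w ! i)))"
proof -
  let ?gt = "\<lambda>a b. lt b a"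
  interpret F: sto ?gt by (rule sto_flip)
  define P where "P = rsk lt w"
  define Q where "Q = rsk ?gt w"
  have hP: "tabl P" "knuth lt (rd P) w" using rsk_props[OF dw] unfolding P_def by auto
  have hQ: "F.tabl Q" "knuth ?gt (rd Q) w" using F.rsk_props[OF dw] unfolding Q_def by auto
  have dP: "distinct (concat P)" using rsk_mset[of lt w] dw unfolding P_def by (metis mset_eq_imp_distinct_iff)
  have dQ: "distinct (concat Q)" using rsk_mset[of ?gt w] dw unfolding Q_def by (metis mset_eq_imp_distinct_iff)
  have kQ: "knuth lt (rd Q) w" using hQ(2) knuth_flip_eq by simp
  have "gI lt k (rd P) = gI lt k w" using gI_knuth[OF hP(2) distinct_rd[OF dP]] .
  moreover have "gI lt k (rd Q) = gI lt k w" using gI_knuth[OF kQ distinct_rd[OF dQ]] .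
  moreover have "gI lt k (rd P) = (\<Sum>i<min k (length P). length (P!i))" using gI_rows[OF hP(1) dP] .
  moreover have "gI (\<lambda>a b. ?gt b a) k (rd Q) = (\<Sum>i<length Q. min k (length (Q!i)))" using F.gI_cols[OF hQ(1) dQ] .
  ultimately show ?thesis unfolding P_def Q_def by simp
qed

end

lemma fold_max_gt: "k < fold max xs a \<longleftrightarrow> k < a \<or> (\<exists>l\<in>set xs. k < l)"
  for k :: nat
  by (induction xs arbitrary: a) (auto simp: less_max_iff_disj)

lemma sum_min_Suc:
  "(\<Sum>i<length mu. min (Suc k) (mu!i)) = (\<Sum>i<length mu. min k (mu!i)) + length (filter (\<lambda>l. k < l) mu)"
proof (induction mu)
  case Nil then show ?case by simp
next
  case (Cons a mu)
  have e: "(\<Sum>i<length (a # mu). f ((a # mu)!i)) = f a + (\<Sum>i<length mu. f (mu!i))" for f :: "nat \<Rightarrow> nat"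
    by (simp only: length_Cons sum.lessThan_Suc_shift nth_Cons_0 nth_Cons_Suc)
  show ?case unfolding e using Cons by auto
qed

lemma conj_from_sums:
  assumes pos: "\<forall>x\<in>set lam. 0 < x"
    and S: "\<And>k. (\<Sum>i<min k (length lam). lam!i) = (\<Sum>i<length mu. min k (mu!i))"
  shows "lam = conj_part mu"
proof -
  let ?L = "length lam"
  let ?cnt = "\<lambda>k. length (filter (\<lambda>l. k < l) mu)"
  have cnt: "?cnt k = (if k < ?L then lam!k else 0)" for k
  proof -
    have a: "(\<Sum>i<min (Suc k) ?L. lam!i) = (\<Sum>i<min k ?L. lam!i) + (if k < ?L then lam!k else 0)"
    proof (cases "k < ?L")
      case True
      then have "min (Suc k) ?L = Suc k" "min k ?L = k" by auto
      then show ?thesis using True by simp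
    next
      case False
      then have "min (Suc k) ?L = ?L" "min k ?L = ?L" by auto
      then show ?thesis using False by simp
    qed
    show ?thesis using a S[of "Suc k"] S[of k] sum_min_Suc[where mu=mu and k=k] by simp
  qed
  have fm: "fold max mu 0 = ?L"
  proof (rule antisym)
    have "\<not> ?L < fold max mu 0"
    proof
      assume "?L < fold max mu 0"
      then obtain l where "l \<in> set mu" "?L < l" using fold_max_gt by auto
      then have "?cnt ?L > 0" by (metis filter_empty_conv length_greater_0_conv)
      then show False using cnt[of ?L] by simp
    qed
    then show "fold max mu 0 \<le> ?L" by simp
  next
    show "?L \<le> fold max mu 0"
    proof (cases "?L = 0")
      case False
      then have "?L - 1 < ?L" by simp
      then have "?cnt (?L - 1) > 0" using cnt[of "?L - 1"] pos by (simp add: nth_mem)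
      then obtain l where "l \<in> set mu" "?L - 1 < l" by (metis (mono_tags, lifting) filter_empty_conv length_greater_0_conv)
      then have "?L - 1 < fold max mu 0" using fold_max_gt by blast
      then show ?thesis by simp
    qed simp
  qed
  show ?thesis
  proof (rule nth_equalityI)
    show "length lam = length (conj_part mu)" unfolding conj_part_def fm by simp
  next
    fix i assume "i < length lam"
    then show "lam ! i = conj_part mu ! i" unfolding conj_part_def fm using cnt[of i] by simp
  qed
qed

lemma distinct_filter_idx:
  "distinct (filter P w) \<Longrightarrow> i < length w \<Longrightarrow> j < length w \<Longrightarrow> w!i = w!j \<Longrightarrow> P (w!i) \<Longrightarrow> i = j"
proof (induction w arbitrary: i j)
  case Nil then show ?case by simp
next
  case (Cons c w)
  show ?case
  proof (cases i)
    case 0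
    show ?thesis
    proof (cases j)
      case (Suc j')
      then have "w!j' = c" "P c" "j' < length w" using Cons.prems 0 by auto
      then have "c \<in> set (filter P w)" by (auto simp: in_set_conv_nth)
      then show ?thesis using Cons.prems(1,5) 0 by simp
    qed (use 0 in simp)
  next
    case (Suc i')
    show ?thesis
    proof (cases j)
      case 0
      then have "w!i' = c" "P c" "i' < length w" using Cons.prems Suc by auto
      then have "c \<in> set (filter P w)" by (auto simp: in_set_conv_nth)
      then show ?thesis using Cons.prems(1) Cons.prems(5) Suc 0 \<open>P c\<close> by simp
    next
      case (Suc j')
      have "distinct (filter P w)" using Cons.prems(1) by (cases "P c") auto
      then show ?thesis using Cons.IH[of i' j'] Cons.prems \<open>i = Suc i'\<close> Suc by simp
    qed
  qed
qed

theorem lemma3: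
  fixes r :: "letter rel" and w :: "letter list"
  assumes "admissible r"
    and "distinct (filter is_G w)"
  shows "phi r w = conj_part (phi_t r w)"
proof -
  have lin: "linear_order r" using assms(1) unfolding admissible_def by (elim conjE)
  have linc: "linear_order (r\<inverse>)" using lin by simp
  define tw where "tw = zip w [0..<length w]"
  have mf: "map fst tw = w" unfolding tw_def by simp
  have tw_nth: "i < length w \<Longrightarrow> tw ! i = (w!i, i)" for i unfolding tw_def by simp
  have ltw: "length tw = length w" unfolding tw_def by simp
  have srt: "sorted_wrt (\<lambda>a b. snd a < snd b) tw"
    unfolding sorted_wrt_iff_nth_less using tw_nth ltw by simp
  have dtw: "distinct tw" unfolding tw_def by (rule distinct_zipI2) simp
  have settw: "set tw = {(w!i, i) | i. i < length w}" unfolding tw_def by (auto simp: set_zip)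
  interpret A: stdz r is_LE using lin by unfold_locales
  interpret B: stdz "r\<inverse>" is_LO using linc by unfold_locales
  have mapl: "map length (map (map fst) X) = map length X" for X :: "(letter \<times> nat) list list" by simp
  have e1: "phi r w = map length (rsk (sl r is_LE) tw)"
  proof -
    have "phi r w = map length (rsk (bumps r is_LE) (map fst tw))" unfolding phi_def shape_def RSK_rsk mf ..
    also have "\<dots> = map length (map (map fst) (rsk (bp r is_LE) tw))"
      by (subst rsk_map[where B'="bp r is_LE"]) (simp_all add: bp_def)
    also have "\<dots> = map length (rsk (sl r is_LE) tw)" using A.rsk_agree[OF srt] by simp
    finally show ?thesis .
  qed
  have e2: "phi_t r w = map length (rsk (sl (r\<inverse>) is_LO) tw)"
  proof -
    have "phi_t r w = map length (rsk (bumps (r\<inverse>) is_LO) (map fst tw))" unfolding phi_t_def shape_def RSK_rsk mf ..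
    also have "\<dots> = map length (map (map fst) (rsk (bp (r\<inverse>) is_LO) tw))"
      by (subst rsk_map[where B'="bp (r\<inverse>) is_LO"]) (simp_all add: bp_def)
    also have "\<dots> = map length (rsk (sl (r\<inverse>) is_LO) tw)" using B.rsk_agree[OF srt] by simp
    finally show ?thesis .
  qed
  have e3: "rsk (sl (r\<inverse>) is_LO) tw = rsk (\<lambda>a b. sl r is_LE b a) tw"
  proof -
    have "\<And>a b. a \<in> set tw \<Longrightarrow> b \<in> set tw \<Longrightarrow> sl (r\<inverse>) is_LO a b = sl r is_LE b a"
    proof -
      fix a b assume "a \<in> set tw" "b \<in> set tw"
      then obtain i j where ij: "i < length w" "j < length w" "a = (w!i, i)" "b = (w!j, j)" using settw by auto
      show "sl (r\<inverse>) is_LO a b = sl r is_LE b a"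
      proof (cases "w!i = w!j")
        case False then show ?thesis using ij unfolding sl_def by auto
      next
        case True
        show ?thesis
        proof (cases "w!i")
          case (GL x)
          then have "i = j" using distinct_filter_idx[OF assms(2) ij(1,2) True] by simp
          then show ?thesis using ij unfolding sl_def by simp
        qed (use ij True in \<open>auto simp: sl_def\<close>)
      qed
    qed
    then show ?thesis using rsk_cong[of "set tw" "sl (r\<inverse>) is_LO" "\<lambda>a b. sl r is_LE b a" tw] by simp
  qed
  define lam where "lam = map length (rsk (sl r is_LE) tw)"
  define mu where "mu = map length (rsk (\<lambda>a b. sl r is_LE b a) tw)"
  have pos: "\<forall>x\<in>set lam. 0 < x"
  proof
    fix x assume "x \<in> set lam"
    then obtain i where i: "i < length (rsk (sl r is_LE) tw)" "x = length (rsk (sl r is_LE) tw ! i)"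
      unfolding lam_def by (auto simp: in_set_conv_nth)
    have "A.tabl (rsk (sl r is_LE) tw)" using A.rsk_props[OF dtw] by simp
    then show "0 < x" using A.tabl_row[OF _ i(1)] i(2) by auto
  qed
  have S: "(\<Sum>i<min k (length lam). lam!i) = (\<Sum>i<length mu. min k (mu!i))" for k
  proof -
    have "(\<Sum>i<min k (length lam). lam!i) = (\<Sum>i<min k (length (rsk (sl r is_LE) tw)). length (rsk (sl r is_LE) tw ! i))"
      unfolding lam_def by (rule sum.cong) auto
    also have "\<dots> = (\<Sum>i<length (rsk (\<lambda>a b. sl r is_LE b a) tw). min k (length (rsk (\<lambda>a b. sl r is_LE b a) tw ! i)))"
      by (rule A.duality[OF dtw])
    also have "\<dots> = (\<Sum>i<length mu. min k (mu!i))"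
      unfolding mu_def by (rule sum.cong) auto
    finally show ?thesis .
  qed
  have "lam = conj_part mu" by (rule conj_from_sums[OF pos S])
  then show ?thesis using e1 e2 e3 unfolding lam_def mu_def by simp
qed

end
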